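(* Let $(X,A,Y)$ be jointly distributed with $A,Y\in\{0,1\}$, and assume there exist deterministic functions $f_Y^*,f_A^*$ with $Y=f_Y^*(X)$ and $A=f_A^*(X)$. Define $\Delta_{Y\mid A}:=|\Pr(Y=1\mid A=0)-\Pr(Y=1\mid A=1)|$. Then, maximizing over all (possibly randomized) representations $Z=g(X)$, $$\max_{Z:\ I(A;Z)=0} I(Y;Z)=H(Y)-\Delta_{Y\mid A}\cdot H(A).$$
   Context: A (possibly randomized) representation is $Z=g(X,S)$ for a measurable $g$ and auxiliary randomness $S$ independent of $(X,A,Y)$. $H$ denotes Shannon entropy and $I$ mutual information. *)

theory Defs
  imports "HOL-Probability.Probability"
begin

text \<open>A (possibly randomized) representation Z = g(X,S) of a random variable X whose
  law is the probability measure PX: a probability space M carrying X (with law PX)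
  and auxiliary randomness S (values in MSa) independent of X, together with a
  measurable map g. (A and Y are deterministic functions of X, so independence of S
  from X is independence from (X,A,Y).)\<close>
definition is_rep ::
  "'x measure \<Rightarrow> 'm measure \<Rightarrow> ('m \<Rightarrow> 'x) \<Rightarrow> 's measure \<Rightarrow> ('m \<Rightarrow> 's)
     \<Rightarrow> 'z measure \<Rightarrow> ('x \<times> 's \<Rightarrow> 'z) \<Rightarrow> bool" where
  "is_rep PX M X MSa S MZ g \<longleftrightarrow>
     prob_space M \<and> X \<in> measurable M PX \<and> distr M PX X = PX \<and>
     S \<in> measurable M MSa \<and> prob_space.indep_set M
       (sigma_sets (space M) {X -` B \<inter> space M | B. B \<in> sets PX})
       (sigma_sets (space M) {S -` B \<inter> space M | B. B \<in> sets MSa}) \<and>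
     g \<in> measurable (PX \<Otimes>\<^sub>M MSa) MZ"

definition MI_rep ::
  "'m measure \<Rightarrow> ('m \<Rightarrow> 'x) \<Rightarrow> ('m \<Rightarrow> 's) \<Rightarrow> 'z measure \<Rightarrow> ('x \<times> 's \<Rightarrow> 'z)
     \<Rightarrow> ('x \<Rightarrow> bool) \<Rightarrow> real" where
  "MI_rep M X S MZ g f =
     prob_space.mutual_information M 2 (count_space UNIV) MZ
       (\<lambda>\<omega>. f (X \<omega>)) (\<lambda>\<omega>. g (X \<omega>, S \<omega>))"

definition H2 :: "'x measure \<Rightarrow> ('x \<Rightarrow> bool) \<Rightarrow> real" where
  "H2 PX f = prob_space.entropy PX 2 (count_space UNIV) f"

definition Delta :: "'x measure \<Rightarrow> ('x \<Rightarrow> bool) \<Rightarrow> ('x \<Rightarrow> bool) \<Rightarrow> real" where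
  "Delta PX fA fY =
     \<bar>measure PX {x \<in> space PX. fY x \<and> \<not> fA x} / measure PX {x \<in> space PX. \<not> fA x}
      - measure PX {x \<in> space PX. fY x \<and> fA x} / measure PX {x \<in> space PX. fA x}\<bar>"

end

theory Submission
  imports Defs
begin


definition Hb :: "real \<Rightarrow> real" where
  "Hb q = - (q * log 2 q) - (1 - q) * log 2 (1 - q)"

lemma xlnx_ge: fixes x c :: real assumes "0 \<le> x" "0 < c" shows "x * ln x \<ge> x * ln c + x - c"
proof (cases "x = 0")
  case False
  then have x: "0 < x" using assms by auto
  have "ln (c / x) \<le> c / x - 1" using ln_le_minus_one[of "c/x"] x \<open>0<c\<close> by auto
  then have "x * ln (c/x) \<le> x * (c/x - 1)" using x by (intro mult_left_mono) auto
  also have "x * (c/x - 1) = c - x" using x by (simp add: field_simps)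
  finally show ?thesis using x \<open>0<c\<close> by (simp add: ln_div algebra_simps)
qed (use assms in auto)

lemma xlnx_gt: "0 \<le> x \<Longrightarrow> 0 < c \<Longrightarrow> x \<noteq> c \<Longrightarrow> 0 < x \<Longrightarrow> x * ln x > x * ln c + x - c" for x c :: real
proof -
  assume "0 \<le> x" "0 < c" "x \<noteq> c" and x: "0 < x"
  have ne: "c / x \<noteq> 1" using \<open>x \<noteq> c\<close> x by (auto simp: field_simps)
  have "ln (c / x) \<le> c / x - 1" using ln_le_minus_one[of "c/x"] x \<open>0<c\<close> by auto
  moreover have "ln (c / x) \<noteq> c / x - 1" using ln_eq_minus_one[of "c/x"] ne x \<open>0<c\<close> by auto
  ultimately have "ln (c / x) < c / x - 1" by auto
  then have "x * ln (c/x) < x * (c/x - 1)" using x by (intro mult_strict_left_mono) auto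
  also have "x * (c/x - 1) = c - x" using x by (simp add: field_simps)
  finally show ?thesis using x \<open>0<c\<close> by (simp add: ln_div algebra_simps)
qed

lemma gibbs_ln:
  fixes x c :: real
  assumes "0 \<le> x" "x \<le> 1" "0 < c" "c < 1"
  shows "x * ln x + (1 - x) * ln (1 - x) \<ge> x * ln c + (1 - x) * ln (1 - c)"
  using xlnx_ge[of x c] xlnx_ge[of "1 - x" "1 - c"] assms by auto

lemma gibbs_ln_strict:
  fixes x c :: real
  assumes "0 \<le> x" "x \<le> 1" "0 < c" "c < 1" "x \<noteq> c"
  shows "x * ln x + (1 - x) * ln (1 - x) > x * ln c + (1 - x) * ln (1 - c)"
proof (cases "x = 0")
  case True
  then show ?thesis using xlnx_gt[of "1 - x" "1 - c"] xlnx_ge[of x c] assms by auto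
next
  case False
  then show ?thesis using xlnx_gt[of x c] xlnx_ge[of "1 - x" "1 - c"] assms by auto
qed

lemma log2_eq: "log 2 x = ln x / ln 2"
  by (simp add: log_def)

lemma Hb_ln: "Hb q = - (q * ln q + (1 - q) * ln (1 - q)) / ln 2"
  by (simp add: Hb_def log_def field_simps)

lemma Hb_tangent:
  assumes "0 \<le> x" "x \<le> 1" "0 < c" "c < 1"
  shows "Hb x \<le> Hb c + (x - c) * ((ln (1 - c) - ln c) / ln 2)"
proof -
  have "- (x * ln x + (1 - x) * ln (1 - x)) \<le> - (x * ln c + (1 - x) * ln (1 - c))"
    using gibbs_ln[OF assms] by simp
  also have "- (x * ln c + (1 - x) * ln (1 - c)) = - (c * ln c + (1 - c) * ln (1 - c)) + (x - c) * (ln (1 - c) - ln c)"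
    by (simp add: algebra_simps)
  finally show ?thesis unfolding Hb_ln by (simp add: divide_right_mono add_divide_distrib[symmetric])
qed

lemma Hb_0[simp]: "Hb 0 = 0" and Hb_1[simp]: "Hb 1 = 0" by (simp_all add: Hb_def)

lemma Hb_sym: "Hb (1 - q) = Hb q" by (simp add: Hb_def algebra_simps)

lemma Hb_nonneg: "0 \<le> q \<Longrightarrow> q \<le> 1 \<Longrightarrow> 0 \<le> Hb q"
proof -
  assume q: "0 \<le> q" "q \<le> 1"
  have a: "q * ln q \<le> 0"
    using q by (cases "q = 0") (auto intro!: mult_nonneg_nonpos simp: ln_le_zero_iff)
  have b: "(1 - q) * ln (1 - q) \<le> 0"
    using q by (cases "q = 1") (auto intro!: mult_nonneg_nonpos simp: ln_le_zero_iff)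
  show ?thesis unfolding Hb_ln using a b by (auto intro!: divide_nonneg_pos)
qed

lemma Hb_le: "0 \<le> q \<Longrightarrow> q \<le> 1 \<Longrightarrow> Hb q \<le> 2"
proof -
  assume q: "0 \<le> q" "q \<le> 1"
  have a: "q * ln q \<ge> q - 1" using xlnx_ge[of q 1] q by auto
  have b: "(1 - q) * ln (1 - q) \<ge> - q" using xlnx_ge[of "1-q" 1] q by auto
  have "ln 2 \<ge> (1/2::real)" using ln_add1_ge[of 1] by simp
  then have "- (q * ln q + (1 - q) * ln (1 - q)) / ln 2 \<le> 1 / (1/2)"
    using a b by (intro frac_le) auto
  then show ?thesis unfolding Hb_ln by simp
qed

lemma mix_id1: "m = p * u + (1 - p) * v \<Longrightarrow> v * (H + (1 - m) * L) + (u - v) * (H + (p - m) * L)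
            + (1 - u) * (H + (0 - m) * L) = (H::real)"
  by (simp add: algebra_simps) (metis distrib_left)
lemma mix_id2: "m = p * u + (1 - p) * v \<Longrightarrow> u * (H + (1 - m) * L) + (v - u) * (H + ((1 - p) - m) * L)
            + (1 - v) * (H + (0 - m) * L) = (H::real)"
  by (simp add: algebra_simps) (metis distrib_left)

(* three-point concavity: weights w1 at 1, w2 at c, w3 at 0 *)
lemma Hb_mix:
  assumes "0 \<le> u" "u \<le> 1" "0 \<le> v" "v \<le> 1" "0 \<le> p" "p \<le> 1"
  shows "Hb (p * u + (1 - p) * v) \<ge> \<bar>u - v\<bar> * Hb p"
proof -
  let ?m = "p * u + (1 - p) * v"
  have m01: "0 \<le> ?m" "?m \<le> 1"
    using assms by (auto intro!: add_nonneg_nonneg mult_nonneg_nonneg convex_bound_le)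
  show ?thesis
  proof (cases "0 < ?m \<and> ?m < 1")
    case True
    let ?L = "(ln (1 - ?m) - ln ?m) / ln 2"
    have t: "Hb p \<le> Hb ?m + (p - ?m) * ?L" using Hb_tangent[of p ?m] True assms by auto
    show ?thesis
    proof (cases "u \<ge> v")
      case True
      (* m = v*1 + (u-v)*p + (1-u)*0 *)
      have "\<bar>u - v\<bar> * Hb p \<le> (u - v) * (Hb ?m + (p - ?m) * ?L)"
        using t True assms by (auto intro: mult_left_mono)
      also have "(u - v) * (Hb ?m + (p - ?m) * ?L) \<le> Hb ?m"
      proof -
        have t1: "Hb 1 \<le> Hb ?m + (1 - ?m) * ?L" using Hb_tangent[of 1 ?m] \<open>0 < ?m \<and> ?m < 1\<close> by auto
        have t0: "Hb 0 \<le> Hb ?m + (0 - ?m) * ?L" using Hb_tangent[of 0 ?m] \<open>0 < ?m \<and> ?m < 1\<close> by auto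
        have "v * (Hb ?m + (1 - ?m) * ?L) \<ge> 0" using t1 assms by simp
        moreover have "(1 - u) * (Hb ?m + (0 - ?m) * ?L) \<ge> 0" using t0 assms by simp
        moreover have "v * (Hb ?m + (1 - ?m) * ?L) + (u - v) * (Hb ?m + (p - ?m) * ?L)
            + (1 - u) * (Hb ?m + (0 - ?m) * ?L) = Hb ?m"
          by (rule mix_id1) simp
        ultimately show ?thesis by linarith
      qed
      finally show ?thesis .
    next
      case False
      (* m = u*1 + (v-u)*(1-p) + (1-v)*0 ; Hb(1-p) = Hb p *)
      have t': "Hb (1 - p) \<le> Hb ?m + ((1 - p) - ?m) * ?L" using Hb_tangent[of "1-p" ?m] \<open>0 < ?m \<and> ?m < 1\<close> assms by auto
      have "\<bar>u - v\<bar> * Hb p \<le> (v - u) * (Hb ?m + ((1 - p) - ?m) * ?L)"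
        using t' False assms by (auto intro: mult_left_mono simp: Hb_sym)
      also have "(v - u) * (Hb ?m + ((1 - p) - ?m) * ?L) \<le> Hb ?m"
      proof -
        have t1: "Hb 1 \<le> Hb ?m + (1 - ?m) * ?L" using Hb_tangent[of 1 ?m] \<open>0 < ?m \<and> ?m < 1\<close> by auto
        have t0: "Hb 0 \<le> Hb ?m + (0 - ?m) * ?L" using Hb_tangent[of 0 ?m] \<open>0 < ?m \<and> ?m < 1\<close> by auto
        have "u * (Hb ?m + (1 - ?m) * ?L) \<ge> 0" using t1 assms by simp
        moreover have "(1 - v) * (Hb ?m + (0 - ?m) * ?L) \<ge> 0" using t0 assms by simp
        moreover have "u * (Hb ?m + (1 - ?m) * ?L) + (v - u) * (Hb ?m + ((1 - p) - ?m) * ?L)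
            + (1 - v) * (Hb ?m + (0 - ?m) * ?L) = Hb ?m"
          by (rule mix_id2) simp
        ultimately show ?thesis by linarith
      qed
      finally show ?thesis .
    qed
  next
    case False
    then have "?m = 0 \<or> ?m = 1" using m01 by auto
    then have "(p = 0 \<or> p = 1) \<or> u = v"
    proof
      assume m0: "?m = 0"
      show ?thesis
      proof (rule ccontr)
        assume nn: "\<not> ((p = 0 \<or> p = 1) \<or> u = v)"
        then have "0 < p" "p < 1" using assms by auto
        then have "p * u = 0" "(1 - p) * v = 0" using m0 assms
          by (smt (verit) mult_nonneg_nonneg)+
        then show False using \<open>0 < p\<close> \<open>p < 1\<close> nn by auto
      qed
    next
      assume m1: "?m = 1"
      show ?thesis
      proof (rule ccontr)
        assume nn: "\<not> ((p = 0 \<or> p = 1) \<or> u = v)"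
        then have "0 < p" "p < 1" using assms by auto
        have "p * (1 - u) + (1 - p) * (1 - v) = 0" using m1 by (simp add: algebra_simps)
        then have "p * (1 - u) = 0" "(1 - p) * (1 - v) = 0" using assms \<open>0 < p\<close> \<open>p < 1\<close>
          by (smt (verit) mult_nonneg_nonneg)+
        then show False using \<open>0 < p\<close> \<open>p < 1\<close> nn by auto
      qed
    qed
    then show ?thesis using Hb_nonneg[OF m01] by auto
  qed
qed

lemma log2_0[simp]: "log 2 0 = 0" by (simp add: log_def)

lemma xlog_bound:
  fixes x q :: real
  assumes "0 \<le> x" "x \<le> 1" "0 \<le> q"
  shows "\<bar>x * log 2 (x / q)\<bar> \<le> 2 + \<bar>log 2 q\<bar>"
proof (cases "x = 0 \<or> q = 0")
  case True then show ?thesis by auto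
next
  case False
  then have x: "0 < x" and q: "0 < q" using assms by auto
  have a: "x * ln x \<ge> x - 1" using xlnx_ge[of x 1] x by auto
  have b: "x * ln x \<le> 0" using x assms by (auto intro!: mult_nonneg_nonpos simp: ln_le_zero_iff)
  have l2: "ln 2 \<ge> (1/2::real)" using ln_add1_ge[of 1] by simp
  have "\<bar>x * ln x\<bar> \<le> 1" using a b assms by auto
  then have "\<bar>x * ln x\<bar> / ln 2 \<le> 1 / (1/2)" using l2 by (intro frac_le) auto
  then have c: "\<bar>x * log 2 x\<bar> \<le> 2" by (simp add: log_def abs_divide)
  have d: "\<bar>x * log 2 q\<bar> \<le> \<bar>log 2 q\<bar>" using assms by (auto simp: abs_mult intro!: mult_left_le_one_le)
  have "x * log 2 (x / q) = x * log 2 x - x * log 2 q" using x q by (simp add: log_divide algebra_simps)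
  then show ?thesis using c d by linarith
qed

lemma KL_expand:
  fixes q p :: real
  assumes "0 \<le> q" "q \<le> 1" "0 < p" "p < 1"
  shows "q * log 2 (q / p) + (1 - q) * log 2 ((1 - q) / (1 - p)) = - Hb q - q * log 2 p - (1 - q) * log 2 (1 - p)"
proof -
  have e1: "q * log 2 (q / p) = q * log 2 q - q * log 2 p"
    using assms by (cases "q = 0") (auto simp: log_divide algebra_simps)
  have e2: "(1 - q) * log 2 ((1 - q) / (1 - p)) = (1 - q) * log 2 (1 - q) - (1 - q) * log 2 (1 - p)"
    using assms by (cases "q = 1") (auto simp: log_divide algebra_simps)
  show ?thesis unfolding e1 e2 Hb_def by simp
qed

lemma KL_nonneg:
  fixes q p :: real
  assumes "0 \<le> q" "q \<le> 1" "0 < p" "p < 1"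
  shows "q * log 2 (q / p) + (1 - q) * log 2 ((1 - q) / (1 - p)) \<ge> 0"
    and "q \<noteq> p \<Longrightarrow> q * log 2 (q / p) + (1 - q) * log 2 ((1 - q) / (1 - p)) > 0"
proof -
  have eq: "q * log 2 (q / p) + (1 - q) * log 2 ((1 - q) / (1 - p)) =
     ((q * ln q + (1 - q) * ln (1 - q)) - (q * ln p + (1 - q) * ln (1 - p))) / ln 2"
    unfolding KL_expand[OF assms] Hb_ln by (simp add: log_def field_simps)
  show "q * log 2 (q / p) + (1 - q) * log 2 ((1 - q) / (1 - p)) \<ge> 0"
    unfolding eq using gibbs_ln[OF assms] by simp
  show "q \<noteq> p \<Longrightarrow> q * log 2 (q / p) + (1 - q) * log 2 ((1 - q) / (1 - p)) > 0"
    unfolding eq using gibbs_ln_strict[OF assms] by simp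
qed



lemma dist_bool:
  assumes M: "prob_space M" and U[measurable]: "U \<in> measurable M (count_space UNIV)"
  shows "distributed M (count_space UNIV) (U :: _ \<Rightarrow> bool)
           (\<lambda>u. ennreal (measure M {\<omega>\<in>space M. U \<omega> = u}))"
  unfolding distributed_def
proof (intro conjI)
  interpret prob_space M by fact
  show "distr M (count_space UNIV) U = density (count_space UNIV) (\<lambda>u. ennreal (measure M {\<omega>\<in>space M. U \<omega> = u}))"
  proof (rule measure_eqI_finite[where A=UNIV])
    fix a :: bool
    have "emeasure (distr M (count_space UNIV) U) {a} = emeasure M {\<omega>\<in>space M. U \<omega> = a}"
      by (subst emeasure_distr) (auto intro!: arg_cong[where f="emeasure M"])
    also have "\<dots> = ennreal (measure M {\<omega>\<in>space M. U \<omega> = a})"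
      by (simp add: emeasure_eq_measure)
    finally show "emeasure (distr M (count_space UNIV) U) {a} =
      emeasure (density (count_space UNIV) (\<lambda>u. ennreal (measure M {\<omega>\<in>space M. U \<omega> = u}))) {a}"
      by (simp add: emeasure_density nn_integral_count_space_finite)
  qed auto
qed auto

lemma H_neg:
  assumes M: "prob_space M" and Z[measurable]: "Z \<in> measurable M MZ"
    and U[measurable]: "U \<in> measurable M (count_space UNIV)"
    and h[measurable]: "h \<in> borel_measurable MZ" and h0: "\<And>z. 0 \<le> h z" and h1: "\<And>z. h z \<le> 1"
    and H: "\<And>E. E \<in> sets MZ \<Longrightarrow> emeasure M {\<omega>\<in>space M. U \<omega> \<and> Z \<omega> \<in> E}
               = (\<integral>\<^sup>+z. ennreal (h z) * indicator E z \<partial>(distr M MZ Z))"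
    and "E \<in> sets MZ"
  shows "emeasure M {\<omega>\<in>space M. \<not> U \<omega> \<and> Z \<omega> \<in> E}
               = (\<integral>\<^sup>+z. ennreal (1 - h z) * indicator E z \<partial>(distr M MZ Z))"
proof -
  interpret prob_space M by fact
  let ?PZ = "distr M MZ Z"
  have E[measurable]: "E \<in> sets MZ" by fact
  have "emeasure M {\<omega>\<in>space M. Z \<omega> \<in> E} = emeasure M {\<omega>\<in>space M. U \<omega> \<and> Z \<omega> \<in> E}
         + emeasure M {\<omega>\<in>space M. \<not> U \<omega> \<and> Z \<omega> \<in> E}"
    by (subst plus_emeasure) (auto intro!: arg_cong[where f="emeasure M"])
  moreover have "emeasure M {\<omega>\<in>space M. Z \<omega> \<in> E} = (\<integral>\<^sup>+z. indicator E z \<partial>?PZ)"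
    by (subst nn_integral_indicator) (auto simp: emeasure_distr intro!: arg_cong[where f="emeasure M"])
  moreover have "(\<integral>\<^sup>+z. indicator E z \<partial>?PZ) = (\<integral>\<^sup>+z. ennreal (h z) * indicator E z \<partial>?PZ)
       + (\<integral>\<^sup>+z. ennreal (1 - h z) * indicator E z \<partial>?PZ)"
  proof -
    have "(\<integral>\<^sup>+z. indicator E z \<partial>?PZ) = (\<integral>\<^sup>+z. ennreal (h z) * indicator E z + ennreal (1 - h z) * indicator E z \<partial>?PZ)"
      using h0 h1 by (intro nn_integral_cong) (auto simp: ennreal_plus[symmetric] split: split_indicator simp del: ennreal_plus)
    also have "\<dots> = (\<integral>\<^sup>+z. ennreal (h z) * indicator E z \<partial>?PZ) + (\<integral>\<^sup>+z. ennreal (1 - h z) * indicator E z \<partial>?PZ)"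
      by (rule nn_integral_add) auto
    finally show ?thesis .
  qed
  moreover have "emeasure M {\<omega>\<in>space M. U \<omega> \<and> Z \<omega> \<in> E} \<noteq> \<top>" by (simp add: emeasure_finite)
  ultimately show ?thesis using H[OF E] by (simp add: ennreal_add_left_cancel)
qed



lemma dist_pair:
  assumes M: "prob_space M" and Z[measurable]: "Z \<in> measurable M MZ"
    and U[measurable]: "U \<in> measurable M (count_space UNIV)"
    and h[measurable]: "h \<in> borel_measurable MZ" and h0: "\<And>z. 0 \<le> h z" and h1: "\<And>z. h z \<le> 1"
    and H: "\<And>E. E \<in> sets MZ \<Longrightarrow> emeasure M {\<omega>\<in>space M. U \<omega> \<and> Z \<omega> \<in> E}
               = (\<integral>\<^sup>+z. ennreal (h z) * indicator E z \<partial>(distr M MZ Z))"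
  shows "distributed M (count_space UNIV \<Otimes>\<^sub>M distr M MZ Z) (\<lambda>\<omega>. (U \<omega>, Z \<omega>))
          (\<lambda>x. ennreal (if fst x then h (snd x) else 1 - h (snd x)))"
  unfolding distributed_def
proof (intro conjI)
  interpret prob_space M by fact
  let ?PZ = "distr M MZ Z"
  interpret PZ: prob_space ?PZ by (rule prob_space_distr) simp
  let ?F = "\<lambda>x. ennreal (if fst x then h (snd x) else 1 - h (snd x))"
  show Fm: "?F \<in> borel_measurable (count_space UNIV \<Otimes>\<^sub>M ?PZ)"
    by measurable
  show "(\<lambda>\<omega>. (U \<omega>, Z \<omega>)) \<in> measurable M (count_space UNIV \<Otimes>\<^sub>M ?PZ)"
    by measurable
  show "distr M (count_space UNIV \<Otimes>\<^sub>M ?PZ) (\<lambda>\<omega>. (U \<omega>, Z \<omega>)) = density (count_space UNIV \<Otimes>\<^sub>M ?PZ) ?F"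
  proof (rule measure_eqI)
    fix E assume "E \<in> sets (distr M (count_space UNIV \<Otimes>\<^sub>M ?PZ) (\<lambda>\<omega>. (U \<omega>, Z \<omega>)))"
    then have E[measurable]: "E \<in> sets (count_space UNIV \<Otimes>\<^sub>M ?PZ)" by simp
    have ET[measurable]: "Pair True -` E \<in> sets MZ" and EF[measurable]: "Pair False -` E \<in> sets MZ"
      using sets_Pair1[OF E] by auto
    have "emeasure (distr M (count_space UNIV \<Otimes>\<^sub>M ?PZ) (\<lambda>\<omega>. (U \<omega>, Z \<omega>))) E
        = emeasure M ((\<lambda>\<omega>. (U \<omega>, Z \<omega>)) -` E \<inter> space M)"
      by (rule emeasure_distr) auto
    also have "(\<lambda>\<omega>. (U \<omega>, Z \<omega>)) -` E \<inter> space M = {\<omega>\<in>space M. U \<omega> \<and> Z \<omega> \<in> Pair True -` E}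
         \<union> {\<omega>\<in>space M. \<not> U \<omega> \<and> Z \<omega> \<in> Pair False -` E}"
      apply (rule set_eqI)
      subgoal for x by (cases "U x") auto
      done
    also have "emeasure M \<dots> = emeasure M {\<omega>\<in>space M. U \<omega> \<and> Z \<omega> \<in> Pair True -` E}
         + emeasure M {\<omega>\<in>space M. \<not> U \<omega> \<and> Z \<omega> \<in> Pair False -` E}"
      by (subst plus_emeasure) auto
    also have "\<dots> = (\<integral>\<^sup>+z. ennreal (h z) * indicator (Pair True -` E) z \<partial>?PZ)
        + (\<integral>\<^sup>+z. ennreal (1 - h z) * indicator (Pair False -` E) z \<partial>?PZ)"
      using H[OF ET] H_neg[OF M Z U h h0 h1 H EF] by simp
    also have "\<dots> = (\<integral>\<^sup>+u. \<integral>\<^sup>+z. ?F (u, z) * indicator E (u, z) \<partial>?PZ \<partial>count_space UNIV)"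
      by (simp add: nn_integral_count_space_finite UNIV_bool add.commute indicator_def)
    also have "\<dots> = (\<integral>\<^sup>+x. ?F x * indicator E x \<partial>(count_space UNIV \<Otimes>\<^sub>M ?PZ))"
      by (rule PZ.nn_integral_fst) measurable
    also have "\<dots> = emeasure (density (count_space UNIV \<Otimes>\<^sub>M ?PZ) ?F) E"
      by (rule emeasure_density[symmetric]) (auto simp: Fm)
    finally show "emeasure (distr M (count_space UNIV \<Otimes>\<^sub>M ?PZ) (\<lambda>\<omega>. (U \<omega>, Z \<omega>))) E
       = emeasure (density (count_space UNIV \<Otimes>\<^sub>M ?PZ) ?F) E" .
  qed simp
qed



lemma MI_formula:
  assumes M: "prob_space M" and Z[measurable]: "Z \<in> measurable M MZ"
    and U[measurable]: "U \<in> measurable M (count_space UNIV)"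
    and h[measurable]: "h \<in> borel_measurable MZ" and h0: "\<And>z. 0 \<le> h z" and h1: "\<And>z. h z \<le> 1"
    and H: "\<And>E. E \<in> sets MZ \<Longrightarrow> emeasure M {\<omega>\<in>space M. U \<omega> \<and> Z \<omega> \<in> E}
               = (\<integral>\<^sup>+z. ennreal (h z) * indicator E z \<partial>(distr M MZ Z))"
  defines "p \<equiv> measure M {\<omega>\<in>space M. U \<omega>}"
  shows "prob_space.mutual_information M 2 (count_space UNIV) MZ U Z =
     (\<integral>z. h z * log 2 (h z / p) + (1 - h z) * log 2 ((1 - h z) / (1 - p)) \<partial>distr M MZ Z)"
    and "integrable (distr M MZ Z) (\<lambda>z. h z * log 2 (h z / p) + (1 - h z) * log 2 ((1 - h z) / (1 - p)))"
proof -
  interpret prob_space M by fact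
  interpret information_space M 2 by standard simp
  let ?PZ = "distr M MZ Z"
  interpret PZ: prob_space ?PZ by (rule prob_space_distr) simp
  let ?S = "count_space (UNIV :: bool set)"
  interpret S: finite_measure ?S by (rule finite_measure_count_space) simp
  interpret SP: pair_sigma_finite ?S ?PZ ..
  interpret SPf: finite_measure "?S \<Otimes>\<^sub>M ?PZ"
    by (rule finite_measure_pair_measure) unfold_locales
  let ?Px = "\<lambda>u. measure M {\<omega>\<in>space M. U \<omega> = u}"
  let ?Pxy = "\<lambda>x. if fst x then h (snd x) else 1 - h (snd x)"
  have pT: "?Px True = p" unfolding p_def by simp
  have pF: "?Px False = 1 - p"
  proof -
    have "measure M {\<omega>\<in>space M. U \<omega> = False} = measure M (space M - {\<omega>\<in>space M. U \<omega>})"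
      by (intro arg_cong[where f="measure M"]) auto
    also have "\<dots> = 1 - p" unfolding p_def by (subst prob_compl) auto
    finally show ?thesis .
  qed
  have pF': "measure M {\<omega>\<in>space M. \<not> U \<omega>} = 1 - p" using pF by simp
  have p01: "0 \<le> p" "p \<le> 1" unfolding p_def by auto
  have eqMI: "mutual_information 2 ?S MZ U Z = mutual_information 2 ?S ?PZ U Z"
  proof -
    have a: "distr M MZ Z = distr M ?PZ Z" by (rule distr_cong) auto
    have b: "distr M (?S \<Otimes>\<^sub>M MZ) (\<lambda>x. (U x, Z x)) = distr M (?S \<Otimes>\<^sub>M ?PZ) (\<lambda>x. (U x, Z x))"
      by (rule distr_cong) (auto intro!: sets_pair_measure_cong)
    have c: "distr M ?S U \<Otimes>\<^sub>M distr M MZ Z = distr M ?S U \<Otimes>\<^sub>M distr M ?PZ Z"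
      by (rule arg_cong[where f="\<lambda>N. distr M ?S U \<Otimes>\<^sub>M N"]) (rule a)
    show ?thesis unfolding mutual_information_def
      by (rule arg_cong2[where f="KL_divergence 2"]) (rule c, rule b)
  qed
  have Pz: "distributed M ?PZ Z (\<lambda>_. ennreal 1)"
    unfolding distributed_def by (auto simp: density_1 intro!: distr_cong)
  have Pxy: "distributed M (?S \<Otimes>\<^sub>M ?PZ) (\<lambda>\<omega>. (U \<omega>, Z \<omega>)) (\<lambda>x. ennreal (?Pxy x))"
    by (rule dist_pair[OF M Z U h h0 h1 H])
  have MI: "mutual_information 2 ?S ?PZ U Z =
     (\<integral>x. ?Pxy x * log 2 (?Pxy x / (?Px (fst x) * 1)) \<partial>(?S \<Otimes>\<^sub>M ?PZ))"
  proof (rule mutual_information_distr[OF _ _ dist_bool[OF M U] _ Pz _ Pxy])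
    show "sigma_finite_measure ?S" by unfold_locales
    show "sigma_finite_measure ?PZ" by unfold_locales
    show "\<And>x. x \<in> space ?S \<Longrightarrow> 0 \<le> ?Px x" by simp
    show "\<And>y. y \<in> space ?PZ \<Longrightarrow> 0 \<le> (1::real)" by simp
    show "\<And>x y. x \<in> space ?S \<Longrightarrow> y \<in> space ?PZ \<Longrightarrow> 0 \<le> ?Pxy (x, y)"
      using h0 h1 by simp
  qed
  let ?G = "\<lambda>x. ?Pxy x * log 2 (?Pxy x / (?Px (fst x) * 1))"
  have Gm: "?G \<in> borel_measurable (?S \<Otimes>\<^sub>M ?PZ)" by measurable
  have Gint: "integrable (?S \<Otimes>\<^sub>M ?PZ) ?G"
  proof (rule Bochner_Integration.integrable_bound[OF SPf.integrable_const[of "2 + \<bar>log 2 p\<bar> + \<bar>log 2 (1 - p)\<bar>"] Gm])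
    show "AE x in ?S \<Otimes>\<^sub>M ?PZ. norm (?G x) \<le> norm (2 + \<bar>log 2 p\<bar> + \<bar>log 2 (1 - p)\<bar>)"
    proof (intro AE_I2)
      fix x
      show "norm (?G x) \<le> norm (2 + \<bar>log 2 p\<bar> + \<bar>log 2 (1 - p)\<bar>)"
      proof (cases "fst x")
        case True
        then show ?thesis using xlog_bound[of "h (snd x)" p] h0[of "snd x"] h1[of "snd x"] p01 abs_ge_zero[of "log 2 (1 - p)"] by (simp add: p_def[symmetric])
      next
        case False
        then show ?thesis using xlog_bound[of "1 - h (snd x)" "1 - p"] h0[of "snd x"] h1[of "snd x"] p01 abs_ge_zero[of "log 2 p"] pF by simp
      qed
    qed
  qed
  let ?GT = "\<lambda>z. h z * log 2 (h z / p)"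
  let ?GF = "\<lambda>z. (1 - h z) * log 2 ((1 - h z) / (1 - p))"
  have intT: "integrable ?PZ ?GT"
    by (rule Bochner_Integration.integrable_bound[OF PZ.integrable_const[of "2 + \<bar>log 2 p\<bar>"]])
       (use xlog_bound h0 h1 p01 in \<open>auto\<close>)
  have intF: "integrable ?PZ ?GF"
    by (rule Bochner_Integration.integrable_bound[OF PZ.integrable_const[of "2 + \<bar>log 2 (1 - p)\<bar>"]])
       (use xlog_bound h0 h1 p01 in \<open>auto\<close>)
  have "(\<integral>x. ?G x \<partial>(?S \<Otimes>\<^sub>M ?PZ)) = (\<integral>u. \<integral>z. ?G (u, z) \<partial>?PZ \<partial>?S)"
    by (rule SP.integral_fst'[OF Gint, symmetric])
  also have "\<dots> = (\<integral>z. ?GT z \<partial>?PZ) + (\<integral>z. ?GF z \<partial>?PZ)"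
    by (simp add: lebesgue_integral_count_space_finite UNIV_bool p_def[symmetric] pF' add.commute)
  also have "\<dots> = (\<integral>z. ?GT z + ?GF z \<partial>?PZ)"
    by (rule Bochner_Integration.integral_add[OF intT intF, symmetric])
  finally show "mutual_information 2 ?S MZ U Z = (\<integral>z. ?GT z + ?GF z \<partial>?PZ)"
    using eqMI MI by simp
  show "integrable ?PZ (\<lambda>z. ?GT z + ?GF z)" using intT intF by simp
qed


lemma borel_measurable_Hb[measurable]:
  assumes [measurable]: "f \<in> borel_measurable M"
  shows "(\<lambda>x. Hb (f x)) \<in> borel_measurable M"
  unfolding Hb_def by measurable

lemma MI_Hb:
  assumes M: "prob_space M" and Z[measurable]: "Z \<in> measurable M MZ"
    and U[measurable]: "U \<in> measurable M (count_space UNIV)"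
    and h[measurable]: "h \<in> borel_measurable MZ" and h0: "\<And>z. 0 \<le> h z" and h1: "\<And>z. h z \<le> 1"
    and H: "\<And>E. E \<in> sets MZ \<Longrightarrow> emeasure M {\<omega>\<in>space M. U \<omega> \<and> Z \<omega> \<in> E}
               = (\<integral>\<^sup>+z. ennreal (h z) * indicator E z \<partial>(distr M MZ Z))"
  defines "p \<equiv> measure M {\<omega>\<in>space M. U \<omega>}"
  shows "prob_space.mutual_information M 2 (count_space UNIV) MZ U Z =
     Hb p - (\<integral>z. Hb (h z) \<partial>distr M MZ Z)"
    and "(\<integral>z. h z \<partial>distr M MZ Z) = p"
    and "integrable (distr M MZ Z) h"
    and "integrable (distr M MZ Z) (\<lambda>z. Hb (h z))"
proof -
  interpret prob_space M by fact
  let ?PZ = "distr M MZ Z"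
  interpret PZ: prob_space ?PZ by (rule prob_space_distr) simp
  have psp: "measure ?PZ (space MZ) = 1" using PZ.prob_space by (simp add: space_distr)
  note MIf = MI_formula[OF M Z U h h0 h1 H, folded p_def]
  show inth: "integrable ?PZ h"
    by (rule Bochner_Integration.integrable_bound[OF PZ.integrable_const[of "1::real"]]) (use h0 h1 in \<open>auto intro!: AE_I2\<close>)
  show intHb: "integrable ?PZ (\<lambda>z. Hb (h z))"
    by (rule Bochner_Integration.integrable_bound[OF PZ.integrable_const[of "2::real"]])
       (use h0 h1 Hb_nonneg Hb_le in \<open>auto simp: abs_le_iff intro!: AE_I2\<close>)
  have "ennreal p = emeasure M {\<omega>\<in>space M. U \<omega> \<and> Z \<omega> \<in> space MZ}"
    unfolding p_def using measurable_space[OF Z]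
    by (auto simp: emeasure_eq_measure intro!: arg_cong[where f="measure M"])
  also have "\<dots> = (\<integral>\<^sup>+z. ennreal (h z) * indicator (space MZ) z \<partial>?PZ)"
    by (rule H) simp
  also have "\<dots> = (\<integral>\<^sup>+z. ennreal (h z) \<partial>?PZ)"
    by (intro nn_integral_cong) simp
  also have "\<dots> = ennreal (\<integral>z. h z \<partial>?PZ)"
    by (rule nn_integral_eq_integral[OF inth]) (simp add: h0)
  finally have "ennreal p = ennreal (\<integral>z. h z \<partial>?PZ)" .
  moreover have "0 \<le> p" unfolding p_def by simp
  moreover have "0 \<le> (\<integral>z. h z \<partial>?PZ)" by (simp add: h0)
  ultimately show inteq: "(\<integral>z. h z \<partial>?PZ) = p" by simp
  have p01: "0 \<le> p" "p \<le> 1" unfolding p_def by auto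
  let ?K = "\<lambda>z. h z * log 2 (h z / p) + (1 - h z) * log 2 ((1 - h z) / (1 - p))"
  show "prob_space.mutual_information M 2 (count_space UNIV) MZ U Z = Hb p - (\<integral>z. Hb (h z) \<partial>?PZ)"
  proof (cases "0 < p \<and> p < 1")
    case True
    have "(\<integral>z. ?K z \<partial>?PZ) = (\<integral>z. (- Hb (h z)) + (h z * (log 2 (1 - p) - log 2 p) - log 2 (1 - p)) \<partial>?PZ)"
    proof (intro Bochner_Integration.integral_cong refl)
      fix z
      have e: "?K z = - Hb (h z) - h z * log 2 p - (1 - h z) * log 2 (1 - p)"
        by (rule KL_expand) (use True h0 h1 in auto)
      show "?K z = (- Hb (h z)) + (h z * (log 2 (1 - p) - log 2 p) - log 2 (1 - p))"
        unfolding e by (simp add: algebra_simps)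
    qed
    also have "\<dots> = (\<integral>z. - Hb (h z) \<partial>?PZ) + (\<integral>z. h z * (log 2 (1 - p) - log 2 p) - log 2 (1 - p) \<partial>?PZ)"
      by (rule Bochner_Integration.integral_add) (use inth intHb in auto)
    also have "(\<integral>z. h z * (log 2 (1 - p) - log 2 p) - log 2 (1 - p) \<partial>?PZ)
        = (\<integral>z. h z * (log 2 (1 - p) - log 2 p) \<partial>?PZ) - (\<integral>z. log 2 (1 - p) \<partial>?PZ)"
      by (rule Bochner_Integration.integral_diff) (use inth in auto)
    also have "(\<integral>z. h z * (log 2 (1 - p) - log 2 p) \<partial>?PZ) = p * (log 2 (1 - p) - log 2 p)"
      using inteq by simp
    also have "(\<integral>z. - Hb (h z) \<partial>?PZ) = - (\<integral>z. Hb (h z) \<partial>?PZ)"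
      by (rule Bochner_Integration.integral_minus)
    also have "(\<integral>z. log 2 (1 - p) \<partial>?PZ) = log 2 (1 - p)"
      using PZ.prob_space by (simp add: space_distr)
    finally have IK: "(\<integral>z. ?K z \<partial>?PZ) = - (\<integral>z. Hb (h z) \<partial>?PZ) + (p * (log 2 (1 - p) - log 2 p) - log 2 (1 - p))" .
    have "Hb p = p * (log 2 (1 - p) - log 2 p) - log 2 (1 - p)"
      by (simp add: Hb_def algebra_simps)
    then show ?thesis using MIf(1) IK by simp
  next
    case False
    then have "p = 0 \<or> p = 1" using p01 by auto
    then show ?thesis
    proof
      assume p0: "p = 0"
      have "AE z in ?PZ. h z = 0"
        using integral_nonneg_eq_0_iff_AE[OF inth] inteq p0 h0 by simp
      then have a: "AE z in ?PZ. ?K z = 0 \<and> Hb (h z) = 0"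
        by eventually_elim (simp add: p0)
      have "(\<integral>z. ?K z \<partial>?PZ) = 0"
        using a by (subst integral_cong_AE[where g="\<lambda>_. 0"]) (auto elim: AE_mp)
      moreover have "(\<integral>z. Hb (h z) \<partial>?PZ) = 0"
        using a by (subst integral_cong_AE[where g="\<lambda>_. 0"]) (auto elim: AE_mp)
      ultimately show ?thesis using MIf(1) p0 by simp
    next
      assume p1: "p = 1"
      have int1: "integrable ?PZ (\<lambda>z. 1 - h z)" using inth by auto
      have "(\<integral>z. 1 - h z \<partial>?PZ) = 0"
        using inteq p1 inth psp by (subst Bochner_Integration.integral_diff) auto
      then have "AE z in ?PZ. 1 - h z = 0"
        using integral_nonneg_eq_0_iff_AE[OF int1] h1 by simp
      then have a: "AE z in ?PZ. ?K z = 0 \<and> Hb (h z) = 0"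
        by eventually_elim (simp add: p1)
      have "(\<integral>z. ?K z \<partial>?PZ) = 0"
        using a by (subst integral_cong_AE[where g="\<lambda>_. 0"]) (auto elim: AE_mp)
      moreover have "(\<integral>z. Hb (h z) \<partial>?PZ) = 0"
        using a by (subst integral_cong_AE[where g="\<lambda>_. 0"]) (auto elim: AE_mp)
      ultimately show ?thesis using MIf(1) p1 by simp
    qed
  qed
qed


lemma RN_event:
  assumes M: "prob_space M" and Z[measurable]: "Z \<in> measurable M MZ" and B[measurable]: "B \<in> sets M"
  obtains d where "d \<in> borel_measurable MZ" "\<And>z. 0 \<le> d z"
    "\<And>E. E \<in> sets MZ \<Longrightarrow> emeasure M (B \<inter> {\<omega>\<in>space M. Z \<omega> \<in> E})
        = (\<integral>\<^sup>+z. ennreal (d z) * indicator E z \<partial>(distr M MZ Z))"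
proof -
  interpret prob_space M by fact
  let ?PZ = "distr M MZ Z"
  interpret PZ: prob_space ?PZ by (rule prob_space_distr) simp
  let ?N = "distr (density M (indicator B)) MZ Z"
  have sN: "sets ?N = sets ?PZ" by simp
  have eN: "emeasure ?N E = emeasure M (B \<inter> {\<omega>\<in>space M. Z \<omega> \<in> E})" if E[measurable]: "E \<in> sets MZ" for E
  proof -
    have "emeasure ?N E = emeasure (density M (indicator B)) (Z -` E \<inter> space M)"
      by (subst emeasure_distr) auto
    also have "\<dots> = (\<integral>\<^sup>+x. indicator B x * indicator (Z -` E \<inter> space M) x \<partial>M)"
      by (subst emeasure_density) auto
    also have "\<dots> = (\<integral>\<^sup>+x. indicator (B \<inter> {\<omega>\<in>space M. Z \<omega> \<in> E}) x \<partial>M)"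
      by (intro nn_integral_cong) (auto split: split_indicator)
    also have "\<dots> = emeasure M (B \<inter> {\<omega>\<in>space M. Z \<omega> \<in> E})"
      by (rule nn_integral_indicator) auto
    finally show ?thesis .
  qed
  have fin: "finite_measure ?N"
  proof (rule finite_measureI)
    have "emeasure ?N (space ?N) = emeasure M (B \<inter> {\<omega>\<in>space M. Z \<omega> \<in> space MZ})"
      using eN[of "space MZ"] by simp
    also have "\<dots> \<noteq> \<infinity>" by (simp add: emeasure_finite)
    finally show "emeasure ?N (space ?N) \<noteq> \<infinity>" .
  qed
  have ac: "absolutely_continuous ?PZ ?N"
    unfolding absolutely_continuous_def
  proof
    fix E assume "E \<in> null_sets ?PZ"
    then have E[measurable]: "E \<in> sets MZ" and E0: "emeasure ?PZ E = 0" by auto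
    have "emeasure ?N E = emeasure M (B \<inter> {\<omega>\<in>space M. Z \<omega> \<in> E})" by (rule eN) fact
    also have "\<dots> \<le> emeasure M (Z -` E \<inter> space M)"
      by (intro emeasure_mono) auto
    also have "\<dots> = 0" using E0 by (simp add: emeasure_distr)
    finally show "E \<in> null_sets ?N" using E by auto
  qed
  obtain D where D[measurable]: "D \<in> borel_measurable ?PZ"
    and DAE: "AE x in ?PZ. RN_deriv ?PZ ?N x = ennreal (D x)" and D0: "\<And>x. 0 \<le> D x"
    using PZ.real_RN_deriv[OF fin ac sN] by blast
  have dens: "density ?PZ (RN_deriv ?PZ ?N) = ?N"
    by (rule PZ.density_RN_deriv[OF ac sN])
  show ?thesis
  proof (rule that[of D])
    show "D \<in> borel_measurable MZ" using D by simp
    show "\<And>z. 0 \<le> D z" by fact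
    fix E assume E[measurable]: "E \<in> sets MZ"
    have "emeasure M (B \<inter> {\<omega>\<in>space M. Z \<omega> \<in> E}) = emeasure (density ?PZ (RN_deriv ?PZ ?N)) E"
      unfolding dens by (rule eN[symmetric]) fact
    also have "\<dots> = (\<integral>\<^sup>+z. RN_deriv ?PZ ?N z * indicator E z \<partial>?PZ)"
      by (subst emeasure_density) auto
    also have "\<dots> = (\<integral>\<^sup>+z. ennreal (D z) * indicator E z \<partial>?PZ)"
      using DAE by (intro nn_integral_cong_AE) auto
    finally show "emeasure M (B \<inter> {\<omega>\<in>space M. Z \<omega> \<in> E}) = (\<integral>\<^sup>+z. ennreal (D z) * indicator E z \<partial>?PZ)" .
  qed
qed


lemma sum_one:
  fixes T :: "_ \<Rightarrow> 't::finite"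
  assumes M: "prob_space M" and Z[measurable]: "Z \<in> measurable M MZ"
    and T[measurable]: "T \<in> measurable M (count_space UNIV)"
    and d[measurable]: "\<And>t. d t \<in> borel_measurable MZ" and d0: "\<And>t z. 0 \<le> d t z"
    and H: "\<And>t E. E \<in> sets MZ \<Longrightarrow> emeasure M ({\<omega>\<in>space M. T \<omega> = t} \<inter> {\<omega>\<in>space M. Z \<omega> \<in> E})
              = (\<integral>\<^sup>+z. ennreal (d t z) * indicator E z \<partial>(distr M MZ Z))"
  shows "AE z in distr M MZ Z. (\<Sum>t\<in>UNIV. d t z) = 1"
proof -
  interpret prob_space M by fact
  let ?PZ = "distr M MZ Z"
  interpret PZ: prob_space ?PZ by (rule prob_space_distr) simp
  have "AE z in ?PZ. ennreal (\<Sum>t\<in>UNIV. d t z) = 1"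
  proof (rule PZ.density_unique_finite_measure)
    show "(\<lambda>z. ennreal (\<Sum>t\<in>UNIV. d t z)) \<in> borel_measurable ?PZ" by measurable
    show "(\<lambda>z. 1::ennreal) \<in> borel_measurable ?PZ" by measurable
    show "AE x in ?PZ. 0 \<le> ennreal (\<Sum>t\<in>UNIV. d t x)" by simp
    show "AE x in ?PZ. 0 \<le> (1::ennreal)" by simp
    fix E assume "E \<in> sets ?PZ"
    then have E[measurable]: "E \<in> sets MZ" by simp
    have "(\<integral>\<^sup>+z. ennreal (\<Sum>t\<in>UNIV. d t z) * indicator E z \<partial>?PZ)
        = (\<integral>\<^sup>+z. (\<Sum>t\<in>UNIV. ennreal (d t z) * indicator E z) \<partial>?PZ)"
      using d0 by (intro nn_integral_cong) (simp add: sum_distrib_right[symmetric] sum_ennreal[symmetric] del: sum_ennreal)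
    also have "\<dots> = (\<Sum>t\<in>UNIV. (\<integral>\<^sup>+z. ennreal (d t z) * indicator E z \<partial>?PZ))"
      by (rule nn_integral_sum) auto
    also have "\<dots> = (\<Sum>t\<in>UNIV. emeasure M ({\<omega>\<in>space M. T \<omega> = t} \<inter> {\<omega>\<in>space M. Z \<omega> \<in> E}))"
      using H[OF E] by simp
    also have "\<dots> = emeasure M (\<Union>t\<in>UNIV. {\<omega>\<in>space M. T \<omega> = t} \<inter> {\<omega>\<in>space M. Z \<omega> \<in> E})"
      by (rule sum_emeasure) (auto simp: disjoint_family_on_def)
    also have "(\<Union>t\<in>UNIV. {\<omega>\<in>space M. T \<omega> = t} \<inter> {\<omega>\<in>space M. Z \<omega> \<in> E}) = Z -` E \<inter> space M"
      by auto
    also have "emeasure M (Z -` E \<inter> space M) = emeasure ?PZ E"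
      by (simp add: emeasure_distr)
    also have "\<dots> = (\<integral>\<^sup>+z. 1 * indicator E z \<partial>?PZ)"
      by simp
    finally show "(\<integral>\<^sup>+z. ennreal (\<Sum>t\<in>UNIV. d t z) * indicator E z \<partial>?PZ) = (\<integral>\<^sup>+z. 1 * indicator E z \<partial>?PZ)" .
  qed
  then show ?thesis by eventually_elim simp
qed

lemma comb:
  assumes M: "prob_space M" and Z[measurable]: "Z \<in> measurable M MZ"
    and d1[measurable]: "d1 \<in> borel_measurable MZ" and d10: "\<And>z. 0 \<le> d1 z"
    and d2[measurable]: "d2 \<in> borel_measurable MZ" and d20: "\<And>z. 0 \<le> d2 z"
    and le: "AE z in distr M MZ Z. d1 z + d2 z \<le> 1"
    and B1[measurable]: "B1 \<in> sets M" and B2[measurable]: "B2 \<in> sets M" and disj: "B1 \<inter> B2 = {}"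
    and H1: "\<And>E. E \<in> sets MZ \<Longrightarrow> emeasure M (B1 \<inter> {\<omega>\<in>space M. Z \<omega> \<in> E})
              = (\<integral>\<^sup>+z. ennreal (d1 z) * indicator E z \<partial>(distr M MZ Z))"
    and H2: "\<And>E. E \<in> sets MZ \<Longrightarrow> emeasure M (B2 \<inter> {\<omega>\<in>space M. Z \<omega> \<in> E})
              = (\<integral>\<^sup>+z. ennreal (d2 z) * indicator E z \<partial>(distr M MZ Z))"
    and C: "\<And>E. {\<omega>\<in>space M. U \<omega> \<and> Z \<omega> \<in> E} = (B1 \<union> B2) \<inter> {\<omega>\<in>space M. Z \<omega> \<in> E}"
    and E[measurable]: "E \<in> sets MZ"
  shows "emeasure M {\<omega>\<in>space M. U \<omega> \<and> Z \<omega> \<in> E}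
           = (\<integral>\<^sup>+z. ennreal (min 1 (d1 z + d2 z)) * indicator E z \<partial>(distr M MZ Z))"
proof -
  let ?PZ = "distr M MZ Z"
  have "emeasure M {\<omega>\<in>space M. U \<omega> \<and> Z \<omega> \<in> E}
      = emeasure M (B1 \<inter> {\<omega>\<in>space M. Z \<omega> \<in> E}) + emeasure M (B2 \<inter> {\<omega>\<in>space M. Z \<omega> \<in> E})"
    unfolding C using disj by (subst plus_emeasure) (auto intro!: arg_cong[where f="emeasure M"])
  also have "\<dots> = (\<integral>\<^sup>+z. ennreal (d1 z) * indicator E z \<partial>?PZ) + (\<integral>\<^sup>+z. ennreal (d2 z) * indicator E z \<partial>?PZ)"
    using H1[OF E] H2[OF E] by simp
  also have "\<dots> = (\<integral>\<^sup>+z. ennreal (d1 z) * indicator E z + ennreal (d2 z) * indicator E z \<partial>?PZ)"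
    by (rule nn_integral_add[symmetric]) auto
  also have "\<dots> = (\<integral>\<^sup>+z. ennreal (min 1 (d1 z + d2 z)) * indicator E z \<partial>?PZ)"
    using le
  proof (intro nn_integral_cong_AE, eventually_elim)
    case (elim z)
    then show ?case using d10[of z] d20[of z]
      by (auto simp: ennreal_plus[symmetric] distrib_right[symmetric] min_def simp del: ennreal_plus)
  qed
  finally show ?thesis .
qed


lemma sum_UNIV_bool2: "(\<Sum>t\<in>(UNIV::(bool\<times>bool) set). f t) = f (True,True) + f (True,False) + f (False,True) + f (False,False)"
  for f :: "bool \<times> bool \<Rightarrow> 'a::comm_monoid_add"
proof -
  have u: "(UNIV::(bool\<times>bool) set) = {(True,True), (True,False), (False,True), (False,False)}"
    by auto
  show ?thesis unfolding u by (simp add: add.assoc)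
qed

lemma measurable_pair_bool:
  fixes A Y :: "_ \<Rightarrow> bool"
  assumes [measurable]: "A \<in> measurable M (count_space UNIV)" "Y \<in> measurable M (count_space UNIV)"
  shows "(\<lambda>\<omega>. (A \<omega>, Y \<omega>)) \<in> measurable M (count_space UNIV)"
proof -
  have "(\<lambda>\<omega>. (A \<omega>, Y \<omega>)) -` {t} \<inter> space M \<in> sets M" for t :: "bool \<times> bool"
  proof -
    have "(\<lambda>\<omega>. (A \<omega>, Y \<omega>)) -` {t} \<inter> space M = {\<omega>\<in>space M. A \<omega> = fst t \<and> Y \<omega> = snd t}"
      by (cases t) auto
    also have "\<dots> \<in> sets M" by measurable
    finally show ?thesis .
  qed
  then show ?thesis
    by (subst measurable_count_space_eq2) auto
qed

lemma upper:
  fixes A Y :: "'m \<Rightarrow> bool"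
  assumes M: "prob_space M" and Z[measurable]: "Z \<in> measurable M MZ"
    and A[measurable]: "A \<in> measurable M (count_space UNIV)"
    and Y[measurable]: "Y \<in> measurable M (count_space UNIV)"
    and MIA: "prob_space.mutual_information M 2 (count_space UNIV) MZ A Z = 0"
  shows "prob_space.mutual_information M 2 (count_space UNIV) MZ Y Z \<le>
     Hb (measure M {\<omega>\<in>space M. Y \<omega>}) -
     \<bar>measure M {\<omega>\<in>space M. Y \<omega> \<and> \<not> A \<omega>} / measure M {\<omega>\<in>space M. \<not> A \<omega>}
      - measure M {\<omega>\<in>space M. Y \<omega> \<and> A \<omega>} / measure M {\<omega>\<in>space M. A \<omega>}\<bar>
     * Hb (measure M {\<omega>\<in>space M. A \<omega>})"
proof -
  interpret prob_space M by fact
  let ?PZ = "distr M MZ Z"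
  interpret PZ: prob_space ?PZ by (rule prob_space_distr) simp
  define B where "B t = {\<omega>\<in>space M. (A \<omega>, Y \<omega>) = t}" for t
  have Bm[measurable]: "B t \<in> sets M" for t
  proof -
    have "B t = (\<lambda>\<omega>. (A \<omega>, Y \<omega>)) -` {t} \<inter> space M" unfolding B_def by auto
    also have "\<dots> \<in> sets M" by (rule measurable_sets[OF measurable_pair_bool[OF A Y]]) simp
    finally show ?thesis .
  qed
  have "\<forall>t. \<exists>d. d \<in> borel_measurable MZ \<and> (\<forall>z. 0 \<le> d z) \<and> (\<forall>E\<in>sets MZ.
      emeasure M (B t \<inter> {\<omega>\<in>space M. Z \<omega> \<in> E}) = (\<integral>\<^sup>+z. ennreal (d z) * indicator E z \<partial>?PZ))"
  proof
    fix t
    obtain d where "d \<in> borel_measurable MZ" "\<And>z. 0 \<le> d z"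
      "\<And>E. E \<in> sets MZ \<Longrightarrow> emeasure M (B t \<inter> {\<omega>\<in>space M. Z \<omega> \<in> E}) = (\<integral>\<^sup>+z. ennreal (d z) * indicator E z \<partial>?PZ)"
      using RN_event[OF M Z Bm[of t]] by metis
    then show "\<exists>d. d \<in> borel_measurable MZ \<and> (\<forall>z. 0 \<le> d z) \<and> (\<forall>E\<in>sets MZ.
      emeasure M (B t \<inter> {\<omega>\<in>space M. Z \<omega> \<in> E}) = (\<integral>\<^sup>+z. ennreal (d z) * indicator E z \<partial>?PZ))"
      by blast
  qed
  then have "\<exists>d. \<forall>t. d t \<in> borel_measurable MZ \<and> (\<forall>z. 0 \<le> d t z) \<and> (\<forall>E\<in>sets MZ.
      emeasure M (B t \<inter> {\<omega>\<in>space M. Z \<omega> \<in> E}) = (\<integral>\<^sup>+z. ennreal (d t z) * indicator E z \<partial>?PZ))"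
    by (rule choice)
  then obtain d where dall: "\<forall>t. d t \<in> borel_measurable MZ \<and> (\<forall>z. 0 \<le> d t z) \<and> (\<forall>E\<in>sets MZ.
      emeasure M (B t \<inter> {\<omega>\<in>space M. Z \<omega> \<in> E}) = (\<integral>\<^sup>+z. ennreal (d t z) * indicator E z \<partial>?PZ))"
    by blast
  have dm[measurable]: "\<And>t. d t \<in> borel_measurable MZ" and d0: "\<And>t z. 0 \<le> d t z"
    and dH: "\<And>t E. E \<in> sets MZ \<Longrightarrow> emeasure M (B t \<inter> {\<omega>\<in>space M. Z \<omega> \<in> E}) = (\<integral>\<^sup>+z. ennreal (d t z) * indicator E z \<partial>?PZ)"
    using dall by auto
  have S1: "AE z in ?PZ. (\<Sum>t\<in>UNIV. d t z) = 1"
    by (rule sum_one[OF M Z measurable_pair_bool[OF A Y] dm d0]) (use dH in \<open>simp add: B_def\<close>)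
  then have S1': "AE z in ?PZ. d (True,True) z + d (True,False) z + d (False,True) z + d (False,False) z = 1"
    by (simp add: sum_UNIV_bool2)
  have dint: "integrable ?PZ (d t) \<and> (\<integral>z. d t z \<partial>?PZ) = measure M (B t)" for t
  proof -
    have "ennreal (measure M (B t)) = emeasure M (B t \<inter> {\<omega>\<in>space M. Z \<omega> \<in> space MZ})"
      using measurable_space[OF Z] by (auto simp: emeasure_eq_measure B_def intro!: arg_cong[where f="measure M"])
    also have "\<dots> = (\<integral>\<^sup>+z. ennreal (d t z) * indicator (space MZ) z \<partial>?PZ)" by (rule dH) simp
    also have "\<dots> = (\<integral>\<^sup>+z. ennreal (d t z) \<partial>?PZ)" by (intro nn_integral_cong) simp
    finally have nn: "(\<integral>\<^sup>+z. ennreal (d t z) \<partial>?PZ) = ennreal (measure M (B t))" ..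
    have int: "integrable ?PZ (d t)"
      by (rule integrableI_nonneg) (auto simp: d0 nn)
    have "ennreal (\<integral>z. d t z \<partial>?PZ) = ennreal (measure M (B t))"
      using nn_integral_eq_integral[OF int] d0 nn by simp
    then show ?thesis using int d0 by (simp add: integral_nonneg)
  qed
  define hA where "hA z = min 1 (d (True,False) z + d (True,True) z)" for z
  define hY where "hY z = min 1 (d (False,True) z + d (True,True) z)" for z
  have hAm[measurable]: "hA \<in> borel_measurable MZ" unfolding hA_def by measurable
  have hYm[measurable]: "hY \<in> borel_measurable MZ" unfolding hY_def by measurable
  have hA01: "\<And>z. 0 \<le> hA z" "\<And>z. hA z \<le> 1" unfolding hA_def using d0 by (auto intro: add_nonneg_nonneg)
  have hY01: "\<And>z. 0 \<le> hY z" "\<And>z. hY z \<le> 1" unfolding hY_def using d0 by (auto intro: add_nonneg_nonneg)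
  have HA: "emeasure M {\<omega>\<in>space M. A \<omega> \<and> Z \<omega> \<in> E} = (\<integral>\<^sup>+z. ennreal (hA z) * indicator E z \<partial>?PZ)"
    if E: "E \<in> sets MZ" for E
    unfolding hA_def
  proof (rule comb[OF M Z dm d0 dm d0 _ Bm Bm _ dH dH _ E])
    show "AE z in ?PZ. d (True, False) z + d (True, True) z \<le> 1"
      using S1' by eventually_elim (use d0 in \<open>smt (verit)\<close>)
    show "B (True, False) \<inter> B (True, True) = {}" unfolding B_def by auto
    show "\<And>E. {\<omega> \<in> space M. A \<omega> \<and> Z \<omega> \<in> E} = (B (True, False) \<union> B (True, True)) \<inter> {\<omega> \<in> space M. Z \<omega> \<in> E}"
      unfolding B_def by auto
  qed
  have HY: "emeasure M {\<omega>\<in>space M. Y \<omega> \<and> Z \<omega> \<in> E} = (\<integral>\<^sup>+z. ennreal (hY z) * indicator E z \<partial>?PZ)"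
    if E: "E \<in> sets MZ" for E
    unfolding hY_def
  proof (rule comb[OF M Z dm d0 dm d0 _ Bm Bm _ dH dH _ E])
    show "AE z in ?PZ. d (False, True) z + d (True, True) z \<le> 1"
      using S1' by eventually_elim (use d0 in \<open>smt (verit)\<close>)
    show "B (False, True) \<inter> B (True, True) = {}" unfolding B_def by auto
    show "\<And>E. {\<omega> \<in> space M. Y \<omega> \<and> Z \<omega> \<in> E} = (B (False, True) \<union> B (True, True)) \<inter> {\<omega> \<in> space M. Z \<omega> \<in> E}"
      unfolding B_def by auto
  qed
  note MIY = MI_Hb[OF M Z Y hYm hY01 HY]
  define pA where "pA = measure M {\<omega>\<in>space M. A \<omega>}"
  have p0: "measure M {\<omega>\<in>space M. \<not> A \<omega>} = 1 - pA"
  proof -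
    have "measure M {\<omega>\<in>space M. \<not> A \<omega>} = measure M (space M - {\<omega>\<in>space M. A \<omega>})"
      by (intro arg_cong[where f="measure M"]) auto
    also have "\<dots> = 1 - pA" unfolding pA_def by (subst prob_compl) auto
    finally show ?thesis .
  qed
  have pA01: "0 \<le> pA" "pA \<le> 1" unfolding pA_def by auto
  have BFT: "measure M (B (False, True)) = measure M {\<omega>\<in>space M. Y \<omega> \<and> \<not> A \<omega>}"
    unfolding B_def by (intro arg_cong[where f="measure M"]) auto
  have BTT: "measure M (B (True, True)) = measure M {\<omega>\<in>space M. Y \<omega> \<and> A \<omega>}"
    unfolding B_def by (intro arg_cong[where f="measure M"]) auto
  let ?D = "\<bar>measure M {\<omega>\<in>space M. Y \<omega> \<and> \<not> A \<omega>} / (1 - pA) - measure M {\<omega>\<in>space M. Y \<omega> \<and> A \<omega>} / pA\<bar>"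
  have key: "?D * Hb pA \<le> (\<integral>z. Hb (hY z) \<partial>?PZ)"
  proof (cases "0 < pA \<and> pA < 1")
    case True
    note MIAf = MI_formula[OF M Z A hAm hA01 HA, folded pA_def]
    let ?K = "\<lambda>z. hA z * log 2 (hA z / pA) + (1 - hA z) * log 2 ((1 - hA z) / (1 - pA))"
    have K0: "0 \<le> ?K z" for z using KL_nonneg(1)[of "hA z" pA] hA01[of z] True by auto
    have "AE z in ?PZ. ?K z = 0"
      using integral_nonneg_eq_0_iff_AE[OF MIAf(2)] MIAf(1) MIA K0 by simp
    then have AEA: "AE z in ?PZ. hA z = pA"
    proof eventually_elim
      case (elim z)
      then show ?case using KL_nonneg(2)[of "hA z" pA] hA01[of z] True by force
    qed
    let ?u = "\<lambda>z. d (False, True) z / (1 - pA)"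
    let ?v = "\<lambda>z. d (True, True) z / pA"
    have AEineq: "AE z in ?PZ. \<bar>?u z - ?v z\<bar> * Hb pA \<le> Hb (hY z)"
      using AEA S1'
    proof eventually_elim
      case (elim z)
      have s: "d (True, False) z + d (True, True) z = pA"
        using elim(1) True unfolding hA_def by (auto simp: min_def split: if_splits)
      then have s0: "d (False, True) z + d (False, False) z = 1 - pA" using elim(2) by simp
      have u01: "0 \<le> ?u z" "?u z \<le> 1" using s0 d0[of "(False,True)" z] d0[of "(False,False)" z] True
        by (auto simp: divide_le_eq_1)
      have v01: "0 \<le> ?v z" "?v z \<le> 1" using s d0[of "(True,False)" z] d0[of "(True,True)" z] True
        by (auto simp: divide_le_eq_1)
      have hYz: "hY z = (1 - pA) * ?u z + (1 - (1 - pA)) * ?v z"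
        using s s0 True d0[of "(True,False)" z] d0[of "(False,False)" z] unfolding hY_def by (auto simp: min_def)
      show ?case using Hb_mix[OF u01 v01, of "1 - pA"] pA01 unfolding hYz by (simp add: Hb_sym)
    qed
    have intu: "integrable ?PZ ?u" using dint by auto
    have intv: "integrable ?PZ ?v" using dint by auto
    have intuv: "integrable ?PZ (\<lambda>z. \<bar>?u z - ?v z\<bar> * Hb pA)" using intu intv by auto
    have "(\<integral>z. ?u z - ?v z \<partial>?PZ) = measure M (B (False, True)) / (1 - pA) - measure M (B (True, True)) / pA"
      using dint[of "(False,True)"] dint[of "(True,True)"] intu intv by (simp add: Bochner_Integration.integral_diff)
    then have "?D = \<bar>\<integral>z. ?u z - ?v z \<partial>?PZ\<bar>" using BFT BTT by simp
    also have "\<dots> \<le> (\<integral>z. \<bar>?u z - ?v z\<bar> \<partial>?PZ)"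
      using integral_norm_bound[of ?PZ "\<lambda>z. ?u z - ?v z"] by simp
    finally have "?D * Hb pA \<le> (\<integral>z. \<bar>?u z - ?v z\<bar> \<partial>?PZ) * Hb pA"
      using Hb_nonneg[OF pA01] by (intro mult_right_mono) auto
    also have "\<dots> = (\<integral>z. \<bar>?u z - ?v z\<bar> * Hb pA \<partial>?PZ)" by simp
    also have "\<dots> \<le> (\<integral>z. Hb (hY z) \<partial>?PZ)"
      by (rule integral_mono_AE[OF intuv MIY(4) AEineq])
    finally show ?thesis .
  next
    case False
    then have "pA = 0 \<or> pA = 1" using pA01 by auto
    then have "Hb pA = 0" by auto
    moreover have "0 \<le> (\<integral>z. Hb (hY z) \<partial>?PZ)"
      using Hb_nonneg hY01 by (intro Bochner_Integration.integral_nonneg) auto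
    ultimately show ?thesis by simp
  qed
  show ?thesis using MIY(1) key unfolding p0 pA_def[symmetric] by simp
qed


lemma H2_eq:
  assumes PX: "prob_space PX" and f[measurable]: "f \<in> measurable PX (count_space UNIV)"
  shows "H2 PX f = Hb (measure PX {x\<in>space PX. f x})"
proof -
  interpret prob_space PX by fact
  interpret information_space PX 2 by standard simp
  let ?P = "\<lambda>u. measure PX {x\<in>space PX. f x = u}"
  have "entropy 2 (count_space UNIV) f = - (\<integral>u. ?P u * log 2 (?P u) \<partial>count_space UNIV)"
    by (rule entropy_distr[OF dist_bool[OF PX f]]) simp
  also have "\<dots> = - (?P True * log 2 (?P True) + ?P False * log 2 (?P False))"
    by (simp add: lebesgue_integral_count_space_finite UNIV_bool)
  also have "?P False = 1 - measure PX {x\<in>space PX. f x}"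
  proof -
    have "?P False = measure PX (space PX - {x\<in>space PX. f x})"
      by (intro arg_cong[where f="measure PX"]) auto
    also have "\<dots> = 1 - measure PX {x\<in>space PX. f x}" by (subst prob_compl) auto
    finally show ?thesis .
  qed
  finally show ?thesis unfolding H2_def Hb_def by simp
qed

lemma transport:
  assumes X[measurable]: "X \<in> measurable M PX" and D: "distr M PX X = PX"
    and P[measurable]: "{x\<in>space PX. P x} \<in> sets PX"
  shows "measure PX {x\<in>space PX. P x} = measure M {\<omega>\<in>space M. P (X \<omega>)}"
proof -
  have "measure PX {x\<in>space PX. P x} = measure (distr M PX X) {x\<in>space PX. P x}" by (simp add: D)
  also have "\<dots> = measure M (X -` {x\<in>space PX. P x} \<inter> space M)"
    by (rule measure_distr) auto
  also have "X -` {x\<in>space PX. P x} \<inter> space M = {\<omega>\<in>space M. P (X \<omega>)}"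
    using measurable_space[OF X] by auto
  finally show ?thesis .
qed

lemma part1:
  fixes PX :: "'x measure" and fA fY :: "'x \<Rightarrow> bool"
  assumes PX: "prob_space PX"
    and fA[measurable]: "fA \<in> measurable PX (count_space UNIV)"
    and fY[measurable]: "fY \<in> measurable PX (count_space UNIV)"
    and rep: "is_rep PX M X MSa S MZ g" and MI0: "MI_rep M X S MZ g fA = 0"
  shows "MI_rep M X S MZ g fY \<le> H2 PX fY - Delta PX fA fY * H2 PX fA"
proof -
  have M: "prob_space M" and X[measurable]: "X \<in> measurable M PX" and DX: "distr M PX X = PX"
    and S[measurable]: "S \<in> measurable M MSa" and g[measurable]: "g \<in> measurable (PX \<Otimes>\<^sub>M MSa) MZ"
    using rep unfolding is_rep_def by auto
  have Z[measurable]: "(\<lambda>\<omega>. g (X \<omega>, S \<omega>)) \<in> measurable M MZ" by measurable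
  have A[measurable]: "(\<lambda>\<omega>. fA (X \<omega>)) \<in> measurable M (count_space UNIV)" by measurable
  have Y[measurable]: "(\<lambda>\<omega>. fY (X \<omega>)) \<in> measurable M (count_space UNIV)" by measurable
  have up: "prob_space.mutual_information M 2 (count_space UNIV) MZ (\<lambda>\<omega>. fY (X \<omega>)) (\<lambda>\<omega>. g (X \<omega>, S \<omega>)) \<le>
     Hb (measure M {\<omega>\<in>space M. fY (X \<omega>)}) -
     \<bar>measure M {\<omega>\<in>space M. fY (X \<omega>) \<and> \<not> fA (X \<omega>)} / measure M {\<omega>\<in>space M. \<not> fA (X \<omega>)}
      - measure M {\<omega>\<in>space M. fY (X \<omega>) \<and> fA (X \<omega>)} / measure M {\<omega>\<in>space M. fA (X \<omega>)}\<bar>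
     * Hb (measure M {\<omega>\<in>space M. fA (X \<omega>)})"
    by (rule upper[OF M Z A Y]) (use MI0 in \<open>simp add: MI_rep_def\<close>)
  have t1: "measure PX {x\<in>space PX. fY x} = measure M {\<omega>\<in>space M. fY (X \<omega>)}"
    by (rule transport[OF X DX]) measurable
  have t2: "measure PX {x\<in>space PX. fA x} = measure M {\<omega>\<in>space M. fA (X \<omega>)}"
    by (rule transport[OF X DX]) measurable
  have t3: "measure PX {x\<in>space PX. \<not> fA x} = measure M {\<omega>\<in>space M. \<not> fA (X \<omega>)}"
    by (rule transport[OF X DX]) measurable
  have t4: "measure PX {x\<in>space PX. fY x \<and> fA x} = measure M {\<omega>\<in>space M. fY (X \<omega>) \<and> fA (X \<omega>)}"
    by (rule transport[OF X DX]) measurable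
  have t5: "measure PX {x\<in>space PX. fY x \<and> \<not> fA x} = measure M {\<omega>\<in>space M. fY (X \<omega>) \<and> \<not> fA (X \<omega>)}"
    by (rule transport[OF X DX]) measurable
  show ?thesis
    unfolding MI_rep_def H2_eq[OF PX fY] H2_eq[OF PX fA] Delta_def t1 t2 t3 t4 t5
    using up by simp
qed


lemma disc_MI:
  fixes Z :: "_ \<Rightarrow> real"
  assumes M: "prob_space M" and Z[measurable]: "Z \<in> borel_measurable M"
    and R: "finite R" and ZR: "\<And>\<omega>. \<omega> \<in> space M \<Longrightarrow> Z \<omega> \<in> R"
    and U[measurable]: "U \<in> measurable M (count_space UNIV)"
  defines "c \<equiv> \<lambda>v. measure M {\<omega>\<in>space M. U \<omega> \<and> Z \<omega> = v} / measure M {\<omega>\<in>space M. Z \<omega> = v}"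
  shows "prob_space.mutual_information M 2 (count_space UNIV) borel U Z =
     Hb (measure M {\<omega>\<in>space M. U \<omega>}) - (\<Sum>v\<in>R. measure M {\<omega>\<in>space M. Z \<omega> = v} * Hb (c v))"
proof -
  interpret prob_space M by fact
  let ?PZ = "distr M borel Z"
  define h where "h z = (\<Sum>v\<in>R. if z = v then c v else 0)" for z
  have hm[measurable]: "h \<in> borel_measurable borel" unfolding h_def by measurable
  have hz: "h z = (if z \<in> R then c z else 0)" for z
    unfolding h_def using R by (simp add: sum.delta')
  have cU: "measure M {\<omega>\<in>space M. U \<omega> \<and> Z \<omega> = v} \<le> measure M {\<omega>\<in>space M. Z \<omega> = v}" for v
    by (intro finite_measure_mono) auto
  have c01: "0 \<le> c v" "c v \<le> 1" for v
    unfolding c_def using cU[of v]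
    by (auto simp: divide_le_eq_1 zero_less_measure_iff)
  have cmul: "c v * measure M {\<omega>\<in>space M. Z \<omega> = v} = measure M {\<omega>\<in>space M. U \<omega> \<and> Z \<omega> = v}" for v
  proof (cases "measure M {\<omega>\<in>space M. Z \<omega> = v} = 0")
    case True
    then show ?thesis using cU[of v] measure_nonneg[of M "{\<omega>\<in>space M. U \<omega> \<and> Z \<omega> = v}"]
      unfolding c_def by simp
  next
    case False then show ?thesis unfolding c_def by simp
  qed
  have h01: "0 \<le> h z" "h z \<le> 1" for z unfolding hz using c01 by auto
  have H: "emeasure M {\<omega>\<in>space M. U \<omega> \<and> Z \<omega> \<in> E} = (\<integral>\<^sup>+z. ennreal (h z) * indicator E z \<partial>?PZ)"
    if E[measurable]: "E \<in> sets borel" for E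
  proof -
    have "(\<integral>\<^sup>+z. ennreal (h z) * indicator E z \<partial>?PZ) = (\<integral>\<^sup>+\<omega>. ennreal (h (Z \<omega>)) * indicator E (Z \<omega>) \<partial>M)"
      by (rule nn_integral_distr) auto
    also have "\<dots> = (\<integral>\<^sup>+\<omega>. (\<Sum>v\<in>R. ennreal (c v) * indicator E v * indicator {\<omega>\<in>space M. Z \<omega> = v} \<omega>) \<partial>M)"
    proof (intro nn_integral_cong)
      fix \<omega> assume "\<omega> \<in> space M"
      then have "Z \<omega> \<in> R" by (rule ZR)
      then have "(\<Sum>v\<in>R. ennreal (c v) * indicator E v * indicator {\<omega>\<in>space M. Z \<omega> = v} \<omega>)
          = ennreal (c (Z \<omega>)) * indicator E (Z \<omega>)"
        using \<open>\<omega> \<in> space M\<close> R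
        by (subst sum.mono_neutral_cong_right[where S="{Z \<omega>}"]) (auto simp: indicator_def)
      then show "ennreal (h (Z \<omega>)) * indicator E (Z \<omega>) =
        (\<Sum>v\<in>R. ennreal (c v) * indicator E v * indicator {\<omega>\<in>space M. Z \<omega> = v} \<omega>)"
        using \<open>Z \<omega> \<in> R\<close> by (simp add: hz)
    qed
    also have "\<dots> = (\<Sum>v\<in>R. ennreal (c v) * indicator E v * emeasure M {\<omega>\<in>space M. Z \<omega> = v})"
      by (subst nn_integral_sum) (auto simp: nn_integral_cmult_indicator)
    also have "\<dots> = (\<Sum>v\<in>R. indicator E v * emeasure M {\<omega>\<in>space M. U \<omega> \<and> Z \<omega> = v})"
    proof (intro sum.cong refl)
      fix v
      have "ennreal (c v) * emeasure M {\<omega>\<in>space M. Z \<omega> = v} = emeasure M {\<omega>\<in>space M. U \<omega> \<and> Z \<omega> = v}"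
        using cmul[of v] c01[of v] by (simp add: emeasure_eq_measure ennreal_mult[symmetric])
      then show "ennreal (c v) * indicator E v * emeasure M {\<omega>\<in>space M. Z \<omega> = v}
          = indicator E v * emeasure M {\<omega>\<in>space M. U \<omega> \<and> Z \<omega> = v}"
        by (metis (no_types, lifting) mult.assoc mult.commute)
    qed
    also have "\<dots> = (\<Sum>v\<in>R \<inter> E. emeasure M {\<omega>\<in>space M. U \<omega> \<and> Z \<omega> = v})"
      using R by (simp add: sum.inter_restrict indicator_def if_distrib cong: if_cong)
    also have "\<dots> = emeasure M (\<Union>v\<in>R \<inter> E. {\<omega>\<in>space M. U \<omega> \<and> Z \<omega> = v})"
      using R by (intro sum_emeasure) (auto simp: disjoint_family_on_def)
    also have "(\<Union>v\<in>R \<inter> E. {\<omega>\<in>space M. U \<omega> \<and> Z \<omega> = v}) = {\<omega>\<in>space M. U \<omega> \<and> Z \<omega> \<in> E}"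
      using ZR by auto
    finally show ?thesis ..
  qed
  note MI = MI_Hb[OF M Z U hm h01 H]
  have "(\<integral>z. Hb (h z) \<partial>?PZ) = (\<integral>\<omega>. Hb (h (Z \<omega>)) \<partial>M)"
    by (rule integral_distr) auto
  also have "\<dots> = (\<integral>\<omega>. (\<Sum>v\<in>R. Hb (c v) * indicator {\<omega>\<in>space M. Z \<omega> = v} \<omega>) \<partial>M)"
  proof (intro Bochner_Integration.integral_cong refl)
    fix \<omega> assume "\<omega> \<in> space M"
    then have "Z \<omega> \<in> R" by (rule ZR)
    then show "Hb (h (Z \<omega>)) = (\<Sum>v\<in>R. Hb (c v) * indicator {\<omega>\<in>space M. Z \<omega> = v} \<omega>)"
      using \<open>\<omega> \<in> space M\<close> R
      by (subst sum.mono_neutral_cong_right[where S="{Z \<omega>}"]) (auto simp: indicator_def hz)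
  qed
  also have "\<dots> = (\<Sum>v\<in>R. Hb (c v) * measure M {\<omega>\<in>space M. Z \<omega> = v})"
    by (subst Bochner_Integration.integral_sum) (auto intro!: integrable_real_indicator simp: less_top[symmetric])
  finally show ?thesis using MI(1) by (simp add: ac_simps)
qed


definition U01 :: "real measure" where "U01 = uniform_measure lborel {0..1}"

lemma U01_prob: "prob_space U01"
  unfolding U01_def by (rule prob_space_uniform_measure) auto

lemma space_U01[simp]: "space U01 = UNIV" and sets_U01[simp]: "sets U01 = sets borel"
  by (simp_all add: U01_def)

lemma U01_le:
  assumes "0 \<le> c" "c \<le> 1"
  shows "measure U01 {s. s \<le> c} = c" and "measure U01 {s. \<not> s \<le> c} = 1 - c"
proof -
  have "emeasure U01 {s. s \<le> c} = emeasure lborel ({0..1} \<inter> {s. s \<le> c}) / emeasure lborel {0..1::real}"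
    unfolding U01_def by (rule emeasure_uniform_measure) auto
  also have "{0..1} \<inter> {s. s \<le> c} = {0..c}" using assms by auto
  finally have "emeasure U01 {s. s \<le> c} = ennreal c" using assms divide_ennreal[of c 1] by simp
  then show "measure U01 {s. s \<le> c} = c" using assms by (simp add: measure_def)
  have "emeasure U01 {s. \<not> s \<le> c} = emeasure lborel ({0..1} \<inter> {s. \<not> s \<le> c}) / emeasure lborel {0..1::real}"
    unfolding U01_def by (rule emeasure_uniform_measure) auto
  also have "{0..1} \<inter> {s. \<not> s \<le> c} = {c<..1}" using assms by auto
  finally have "emeasure U01 {s. \<not> s \<le> c} = ennreal (1 - c)" using assms divide_ennreal[of "1 - c" 1] by simp
  then show "measure U01 {s. \<not> s \<le> c} = 1 - c" using assms by (simp add: measure_def)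
qed

lemma distr_pair_snd':
  assumes "prob_space N" "prob_space K"
  shows "distr (N \<Otimes>\<^sub>M K) K snd = K"
proof -
  interpret N: prob_space N by fact
  interpret K: prob_space K by fact
  interpret P: pair_prob_space N K ..
  show ?thesis
  proof (intro measure_eqI)
    fix A assume A: "A \<in> sets (distr (N \<Otimes>\<^sub>M K) K snd)"
    from A have "emeasure (distr (N \<Otimes>\<^sub>M K) K snd) A = emeasure (N \<Otimes>\<^sub>M K) (space N \<times> A)"
      by (auto simp add: emeasure_distr space_pair_measure dest: sets.sets_into_space intro!: arg_cong2[where f=emeasure])
    moreover have "emeasure (N \<Otimes>\<^sub>M K) (space N \<times> A) = emeasure N (space N) * emeasure K A"
      by (rule K.emeasure_pair_measure_Times) (use A in auto)
    ultimately show "emeasure (distr (N \<Otimes>\<^sub>M K) K snd) A = emeasure K A"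
      using N.emeasure_space_1 by simp
  qed simp
qed

lemma rep_pair:
  assumes PX: "prob_space PX" and g[measurable]: "g \<in> measurable (PX \<Otimes>\<^sub>M U01) MZ"
  shows "is_rep PX (PX \<Otimes>\<^sub>M U01) fst U01 snd MZ g"
proof -
  interpret PXs: prob_space PX by fact
  interpret Us: prob_space U01 by (rule U01_prob)
  interpret P: pair_prob_space PX U01 ..
  have d1: "distr (PX \<Otimes>\<^sub>M U01) PX fst = PX" by (rule Us.distr_pair_fst)
  have d2: "distr (PX \<Otimes>\<^sub>M U01) U01 snd = U01" by (rule distr_pair_snd'[OF PX U01_prob])
  let ?M = "PX \<Otimes>\<^sub>M U01"
  let ?F = "{fst -` B \<inter> space ?M | B. B \<in> sets PX}"
  let ?G = "{snd -` B \<inter> space ?M | B. B \<in> sets U01}"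
  have "P.indep_set ?F ?G"
    unfolding P.indep_sets2_eq
  proof (intro conjI ballI)
    show "?F \<subseteq> P.events" using measurable_sets[OF measurable_fst[of PX U01]] by blast
    show "?G \<subseteq> P.events" using measurable_sets[OF measurable_snd[of PX U01]] by blast
    fix a b assume "a \<in> ?F" "b \<in> ?G"
    then obtain A B where A: "A \<in> sets PX" "a = fst -` A \<inter> space ?M"
      and B: "B \<in> sets U01" "b = snd -` B \<inter> space ?M" by auto
    have a: "a = A \<times> space U01" using A sets.sets_into_space[OF A(1)] by (auto simp: space_pair_measure)
    have b: "b = space PX \<times> B" using B sets.sets_into_space[OF B(1)] by (auto simp: space_pair_measure)
    have ab: "a \<inter> b = A \<times> B" using a b sets.sets_into_space[OF A(1)] sets.sets_into_space[OF B(1)] by auto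
    have mt: "P.prob (A' \<times> B') = measure PX A' * measure U01 B'" if "A' \<in> sets PX" "B' \<in> sets U01" for A' B'
      using that by (simp add: measure_def Us.emeasure_pair_measure_Times enn2real_mult)
    have m1: "P.prob (A \<times> B) = measure PX A * measure U01 B" using mt A(1) B(1) by simp
    have m2: "P.prob (A \<times> space U01) = measure PX A" using mt[of A "space U01"] A(1) Us.prob_space by simp
    have m3: "P.prob (space PX \<times> B) = measure U01 B" using mt[of "space PX" B] B(1) PXs.prob_space by simp
    show "P.prob (a \<inter> b) = P.prob a * P.prob b"
      using ab a b m1 m2 m3 by simp
  qed
  moreover have "Int_stable ?F"
    unfolding Int_stable_def by safe (metis (no_types, lifting) sets.Int vimage_Int Int_assoc inf.left_idem inf_commute)
  moreover have "Int_stable ?G"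
    unfolding Int_stable_def by safe (metis (no_types, lifting) sets.Int vimage_Int Int_assoc inf.left_idem inf_commute)
  ultimately have "P.indep_set (sigma_sets (space ?M) ?F) (sigma_sets (space ?M) ?G)"
    by (rule P.indep_set_sigma_sets)
  then show ?thesis unfolding is_rep_def using d1 P.prob_space_axioms by auto
qed


definition vh :: "bool \<Rightarrow> bool \<Rightarrow> real" where
  "vh \<alpha> \<beta> = (if \<alpha> then (if \<beta> then 3 else 2) else (if \<beta> then 3 else 1))"
definition vl :: "bool \<Rightarrow> bool \<Rightarrow> real" where
  "vl \<alpha> \<beta> = (if \<alpha> then (if \<beta> then 1 else 0) else (if \<beta> then 2 else 0))"

lemma vh_vl: "vh \<alpha> \<beta> \<noteq> vl \<alpha> \<beta>" by (simp add: vh_def vl_def)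

lemma mul_div_le: "0 \<le> y \<Longrightarrow> y \<le> x \<Longrightarrow> x * (y / x) = (y::real)"
  by (cases "x = 0") auto

lemma md1: assumes h: "x * (y / x) = (y::real)" shows "(x * p) * (y / x) = p * y"
proof -
  have "(x * p) * (y / x) = p * (x * (y / x))" by (simp only: mult_ac)
  then show ?thesis by (simp only: h)
qed

lemma md2: assumes h: "x * (y / x) = (y::real)" shows "(x * p) * (1 - y / x) = p * (x - y)"
proof -
  have "(x * p) * (1 - y / x) = p * x - p * (x * (y / x))" by (simp only: mult_ac right_diff_distrib mult_1_right)
  then show ?thesis by (simp only: h right_diff_distrib)
qed

lemma alg:
  fixes qTT qTF qFT qFF pA :: real
  assumes nn: "0 \<le> qTT" "0 \<le> qTF" "0 \<le> qFT" "0 \<le> qFF"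
    and s1: "qTT + qTF = pA" and s0: "qFT + qFF = 1 - pA"
  defines "a \<equiv> qFT / (1 - pA)" and "b \<equiv> qTT / pA"
  defines "m \<equiv> min a b"
  shows "0 \<le> a" "a \<le> 1" "0 \<le> b" "b \<le> 1"
    and "qTT * (m / b) = pA * m" "qTT * (1 - m / b) = pA * (b - m)"
    and "qTF * ((a - m) / (1 - b)) = pA * (a - m)" "qTF * (1 - (a - m) / (1 - b)) = pA * (1 - a - b + m)"
    and "qFT * (m / a) = (1 - pA) * m" "qFT * (1 - m / a) = (1 - pA) * (a - m)"
    and "qFF * ((b - m) / (1 - a)) = (1 - pA) * (b - m)" "qFF * (1 - (b - m) / (1 - a)) = (1 - pA) * (1 - a - b + m)"
    and "0 \<le> m / b" "m / b \<le> 1" "0 \<le> (a - m) / (1 - b)" "(a - m) / (1 - b) \<le> 1"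
    and "0 \<le> m / a" "m / a \<le> 1" "0 \<le> (b - m) / (1 - a)" "(b - m) / (1 - a) \<le> 1"
proof -
  have pA: "0 \<le> pA" "pA \<le> 1" using nn s1 s0 by linarith+
  have qTT: "qTT = b * pA" unfolding b_def using nn s1 by (cases "pA = 0") auto
  have qFT: "qFT = a * (1 - pA)" unfolding a_def using nn s0 by (cases "pA = 1") auto
  have qTF: "qTF = (1 - b) * pA" using qTT s1 by (simp add: algebra_simps)
  have qFF: "qFF = (1 - a) * (1 - pA)" using qFT s0 by (simp add: algebra_simps)
  show a0: "0 \<le> a" unfolding a_def using nn pA by auto
  show a1: "a \<le> 1" unfolding a_def using nn s0 by (auto simp: divide_le_eq_1)
  show b0: "0 \<le> b" unfolding b_def using nn pA by auto
  show b1: "b \<le> 1" unfolding b_def using nn s1 by (auto simp: divide_le_eq_1)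
  have m0: "0 \<le> m" "m \<le> a" "m \<le> b" unfolding m_def using a0 b0 by auto
  have d1: "b * (m / b) = m" using m0 by (intro mul_div_le) auto
  have d2: "(1 - b) * ((a - m) / (1 - b)) = a - m"
    by (rule mul_div_le) (use m0 a1 b1 in \<open>auto simp: m_def\<close>)
  have d3: "a * (m / a) = m" using m0 by (intro mul_div_le) auto
  have d4: "(1 - a) * ((b - m) / (1 - a)) = b - m"
    by (rule mul_div_le) (use m0 a1 b1 in \<open>auto simp: m_def\<close>)
  show "qTT * (m / b) = pA * m" unfolding qTT by (rule md1[OF d1])
  show "qTT * (1 - m / b) = pA * (b - m)" unfolding qTT by (rule md2[OF d1])
  show "qTF * ((a - m) / (1 - b)) = pA * (a - m)" unfolding qTF by (rule md1[OF d2])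
  show "qTF * (1 - (a - m) / (1 - b)) = pA * (1 - a - b + m)" unfolding qTF by (rule trans[OF md2[OF d2]]) (simp add: algebra_simps)
  show "qFT * (m / a) = (1 - pA) * m" unfolding qFT by (rule md1[OF d3])
  show "qFT * (1 - m / a) = (1 - pA) * (a - m)" unfolding qFT by (rule md2[OF d3])
  show "qFF * ((b - m) / (1 - a)) = (1 - pA) * (b - m)" unfolding qFF by (rule md1[OF d4])
  show "qFF * (1 - (b - m) / (1 - a)) = (1 - pA) * (1 - a - b + m)" unfolding qFF by (rule trans[OF md2[OF d4]]) (simp add: algebra_simps)
  show "0 \<le> m / b" using m0 b0 by auto
  show "m / b \<le> 1" using m0 b0 by (auto simp: divide_le_eq_1)
  show "0 \<le> (a - m) / (1 - b)" using m0 b1 by auto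
  show "(a - m) / (1 - b) \<le> 1" using m0 a1 b1 by (auto simp: divide_le_eq_1 m_def)
  show "0 \<le> m / a" using m0 a0 by auto
  show "m / a \<le> 1" using m0 a0 by (auto simp: divide_le_eq_1)
  show "0 \<le> (b - m) / (1 - a)" using m0 a1 by auto
  show "(b - m) / (1 - a) \<le> 1" using m0 a1 b1 by (auto simp: divide_le_eq_1 m_def)
qed

lemma xHb1: "x * Hb (p * x / x) = x * Hb p" by (cases "x = 0") auto
lemma xHb2: "x * Hb (x / x) = 0" by (cases "x = 0") auto

context
  fixes PX :: "'x measure" and fA fY :: "'x \<Rightarrow> bool"
  assumes PX: "prob_space PX"
    and fA[measurable]: "fA \<in> measurable PX (count_space UNIV)"
    and fY[measurable]: "fY \<in> measurable PX (count_space UNIV)"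
begin

definition "pA = measure PX {x\<in>space PX. fA x}"
definition "aY = measure PX {x\<in>space PX. fY x \<and> \<not> fA x} / measure PX {x\<in>space PX. \<not> fA x}"
definition "bY = measure PX {x\<in>space PX. fY x \<and> fA x} / measure PX {x\<in>space PX. fA x}"
definition "mY = min aY bY"
definition "cc \<alpha> \<beta> = (if \<alpha> then (if \<beta> then mY / bY else (aY - mY) / (1 - bY))
                      else (if \<beta> then mY / aY else (bY - mY) / (1 - aY)))"
definition "q \<alpha> \<beta> = measure PX {x\<in>space PX. fA x = \<alpha> \<and> fY x = \<beta>}"
definition "gg p = (if snd p \<le> cc (fA (fst p)) (fY (fst p)) then vh (fA (fst p)) (fY (fst p))
                     else vl (fA (fst p)) (fY (fst p)))"

lemma q_facts:
  shows "\<And>\<alpha> \<beta>. 0 \<le> q \<alpha> \<beta>"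
    and "q True True + q True False = pA"
    and "q False True + q False False = 1 - pA"
    and "measure PX {x\<in>space PX. \<not> fA x} = 1 - pA"
    and "measure PX {x\<in>space PX. fY x \<and> fA x} = q True True"
    and "measure PX {x\<in>space PX. fY x \<and> \<not> fA x} = q False True"
    and "measure PX {x\<in>space PX. fY x} = q True True + q False True"
proof -
  interpret prob_space PX by (rule PX)
  show "\<And>\<alpha> \<beta>. 0 \<le> q \<alpha> \<beta>" unfolding q_def by simp
  have c: "measure PX {x\<in>space PX. \<not> fA x} = 1 - pA"
  proof -
    have "measure PX {x\<in>space PX. \<not> fA x} = measure PX (space PX - {x\<in>space PX. fA x})"
      by (intro arg_cong[where f="measure PX"]) auto
    also have "\<dots> = 1 - pA" unfolding pA_def by (subst prob_compl) auto
    finally show ?thesis .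
  qed
  then show "measure PX {x\<in>space PX. \<not> fA x} = 1 - pA" .
  have split: "measure PX {x\<in>space PX. P x} = measure PX {x\<in>space PX. P x \<and> Q x} + measure PX {x\<in>space PX. P x \<and> \<not> Q x}"
    if [measurable]: "Measurable.pred PX P" "Measurable.pred PX Q" for P Q
  proof -
    have "{x\<in>space PX. P x} = {x\<in>space PX. P x \<and> Q x} \<union> {x\<in>space PX. P x \<and> \<not> Q x}" by auto
    then show ?thesis by (simp add: finite_measure_Union[symmetric] disjoint_iff)
  qed
  show "q True True + q True False = pA"
    unfolding q_def pA_def using split[of fA fY] by simp
  show "q False True + q False False = 1 - pA"
    unfolding q_def using split[of "\<lambda>x. \<not> fA x" fY] c by simp
  show "measure PX {x\<in>space PX. fY x \<and> fA x} = q True True"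
    unfolding q_def by (intro arg_cong[where f="measure PX"]) auto
  show "measure PX {x\<in>space PX. fY x \<and> \<not> fA x} = q False True"
    unfolding q_def by (intro arg_cong[where f="measure PX"]) auto
  show "measure PX {x\<in>space PX. fY x} = q True True + q False True"
    unfolding q_def using split[of fY fA] by (simp add: conj_commute)
qed

lemma AB_eq: "aY = q False True / (1 - pA)" "bY = q True True / pA"
  unfolding aY_def bY_def using q_facts(4,5,6) by (simp_all add: pA_def)

lemmas al = alg[OF q_facts(1) q_facts(1) q_facts(1) q_facts(1) q_facts(2) q_facts(3), folded AB_eq, folded mY_def]

lemma cc01: "0 \<le> cc \<alpha> \<beta>" "cc \<alpha> \<beta> \<le> 1"
  unfolding cc_def using al by auto

lemma comp_bool2:
  fixes F :: "bool \<Rightarrow> bool \<Rightarrow> real"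
  shows "(\<lambda>p. F (fA (fst p)) (fY (fst p))) \<in> borel_measurable (PX \<Otimes>\<^sub>M U01)"
proof -
  have T: "(\<lambda>p. (fA (fst p), fY (fst p))) \<in> measurable (PX \<Otimes>\<^sub>M U01) (count_space UNIV)"
    by (rule measurable_pair_bool[OF measurable_compose[OF measurable_fst fA] measurable_compose[OF measurable_fst fY]])
  have "(\<lambda>t. F (fst t) (snd t)) \<in> borel_measurable (count_space UNIV)" by simp
  from measurable_compose[OF T this] show ?thesis by simp
qed

lemma gg_meas[measurable]: "gg \<in> borel_measurable (PX \<Otimes>\<^sub>M U01)"
proof -
  have s: "snd \<in> borel_measurable (PX \<Otimes>\<^sub>M U01)"
    using measurable_snd[of PX U01] measurable_cong_sets[OF refl sets_U01, of "PX \<Otimes>\<^sub>M U01"] by simp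
  have "{p\<in>space (PX \<Otimes>\<^sub>M U01). snd p \<le> cc (fA (fst p)) (fY (fst p))} \<in> sets (PX \<Otimes>\<^sub>M U01)"
    by (rule borel_measurable_le[OF s comp_bool2])
  then show ?thesis unfolding gg_def
    by (rule measurable_If[OF comp_bool2 comp_bool2])
qed

lemma prob_cell:
  "measure (PX \<Otimes>\<^sub>M U01) {\<omega>\<in>space (PX \<Otimes>\<^sub>M U01). fA (fst \<omega>) = \<alpha> \<and> fY (fst \<omega>) = \<beta> \<and> gg \<omega> = v}
    = q \<alpha> \<beta> * ((if vh \<alpha> \<beta> = v then cc \<alpha> \<beta> else 0) + (if vl \<alpha> \<beta> = v then 1 - cc \<alpha> \<beta> else 0))"
proof -
  interpret PXs: prob_space PX by (rule PX)
  interpret Us: prob_space U01 by (rule U01_prob)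
  let ?c = "cc \<alpha> \<beta>"
  let ?B = "(if vh \<alpha> \<beta> = v then {s. s \<le> ?c} else {}) \<union> (if vl \<alpha> \<beta> = v then {s. \<not> s \<le> ?c} else {})"
  have set: "{\<omega>\<in>space (PX \<Otimes>\<^sub>M U01). fA (fst \<omega>) = \<alpha> \<and> fY (fst \<omega>) = \<beta> \<and> gg \<omega> = v}
      = {x\<in>space PX. fA x = \<alpha> \<and> fY x = \<beta>} \<times> ?B"
  proof (intro set_eqI)
    fix \<omega> :: "'x \<times> real"
    have Bmem: "s \<in> ?B \<longleftrightarrow> (if s \<le> ?c then vh \<alpha> \<beta> else vl \<alpha> \<beta>) = v" for s
      using vh_vl[of \<alpha> \<beta>] by auto
    show "\<omega> \<in> {\<omega>\<in>space (PX \<Otimes>\<^sub>M U01). fA (fst \<omega>) = \<alpha> \<and> fY (fst \<omega>) = \<beta> \<and> gg \<omega> = v} \<longleftrightarrow>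
      \<omega> \<in> {x\<in>space PX. fA x = \<alpha> \<and> fY x = \<beta>} \<times> ?B"
    proof (cases \<omega>)
      case (Pair x s)
      show ?thesis
      proof (cases "fA x = \<alpha> \<and> fY x = \<beta>")
        case True
        then show ?thesis unfolding Pair Bmem by (simp add: space_pair_measure gg_def)
      next
        case False
        then show ?thesis unfolding Pair by (auto simp: space_pair_measure)
      qed
    qed
  qed
  have Bm: "?B \<in> sets U01" by auto
  have Am: "{x\<in>space PX. fA x = \<alpha> \<and> fY x = \<beta>} \<in> sets PX" by measurable
  have mB: "measure U01 ?B = (if vh \<alpha> \<beta> = v then ?c else 0) + (if vl \<alpha> \<beta> = v then 1 - ?c else 0)"
    using vh_vl[of \<alpha> \<beta>] U01_le[OF cc01] by auto
  show ?thesis unfolding set q_def mB[symmetric] using Am Bm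
    by (simp add: measure_def Us.emeasure_pair_measure_Times enn2real_mult)
qed

definition "Pc \<alpha> \<beta> v = measure (PX \<Otimes>\<^sub>M U01) {\<omega>\<in>space (PX \<Otimes>\<^sub>M U01). fA (fst \<omega>) = \<alpha> \<and> fY (fst \<omega>) = \<beta> \<and> gg \<omega> = v}"

lemma prob_pred:
  fixes Qp :: "bool \<Rightarrow> bool \<Rightarrow> bool"
  shows "measure (PX \<Otimes>\<^sub>M U01) {\<omega>\<in>space (PX \<Otimes>\<^sub>M U01). Qp (fA (fst \<omega>)) (fY (fst \<omega>)) \<and> gg \<omega> = v}
    = (\<Sum>t\<in>UNIV. if Qp (fst t) (snd t) then Pc (fst t) (snd t) v else 0)"
proof -
  interpret PXs: prob_space PX by (rule PX)
  interpret Us: prob_space U01 by (rule U01_prob)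
  interpret P: pair_prob_space PX U01 ..
  let ?M = "PX \<Otimes>\<^sub>M U01"
  define E where "E t = {\<omega>\<in>space ?M. (fA (fst \<omega>), fY (fst \<omega>)) = t \<and> Qp (fst t) (snd t) \<and> gg \<omega> = v}" for t
  have Em: "E t \<in> sets ?M" for t
  proof (cases "Qp (fst t) (snd t)")
    case True
    have "E t = {\<omega>\<in>space ?M. fA (fst \<omega>) = fst t \<and> fY (fst \<omega>) = snd t \<and> gg \<omega> = v}"
      unfolding E_def using True by (cases t) auto
    also have "\<dots> \<in> sets ?M" by measurable
    finally show ?thesis .
  next
    case False
    then have "E t = {}" unfolding E_def by (cases t) auto
    then show ?thesis by simp
  qed
  have "{\<omega>\<in>space ?M. Qp (fA (fst \<omega>)) (fY (fst \<omega>)) \<and> gg \<omega> = v} = (\<Union>t\<in>UNIV. E t)"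
  proof (rule set_eqI)
    fix \<omega>
    show "\<omega> \<in> {\<omega>\<in>space ?M. Qp (fA (fst \<omega>)) (fY (fst \<omega>)) \<and> gg \<omega> = v} \<longleftrightarrow> \<omega> \<in> (\<Union>t\<in>UNIV. E t)"
    proof
      assume "\<omega> \<in> {\<omega>\<in>space ?M. Qp (fA (fst \<omega>)) (fY (fst \<omega>)) \<and> gg \<omega> = v}"
      then have "\<omega> \<in> E (fA (fst \<omega>), fY (fst \<omega>))" unfolding E_def by simp
      then show "\<omega> \<in> (\<Union>t\<in>UNIV. E t)" by blast
    next
      assume "\<omega> \<in> (\<Union>t\<in>UNIV. E t)"
      then obtain t where "\<omega> \<in> E t" by blast
      then show "\<omega> \<in> {\<omega>\<in>space ?M. Qp (fA (fst \<omega>)) (fY (fst \<omega>)) \<and> gg \<omega> = v}"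
        unfolding E_def by (cases t) auto
    qed
  qed
  then have "measure ?M {\<omega>\<in>space ?M. Qp (fA (fst \<omega>)) (fY (fst \<omega>)) \<and> gg \<omega> = v} = measure ?M (\<Union>t\<in>UNIV. E t)"
    by simp
  also have "\<dots> = (\<Sum>t\<in>UNIV. measure ?M (E t))"
    by (rule P.finite_measure_finite_Union) (use Em in \<open>auto simp: disjoint_family_on_def E_def\<close>)
  also have "\<dots> = (\<Sum>t\<in>UNIV. if Qp (fst t) (snd t) then Pc (fst t) (snd t) v else 0)"
  proof (intro sum.cong refl)
    fix t :: "bool \<times> bool"
    show "measure ?M (E t) = (if Qp (fst t) (snd t) then Pc (fst t) (snd t) v else 0)"
      unfolding E_def Pc_def by (cases t) auto
  qed
  finally show ?thesis .
qed

lemma pZ: "measure (PX \<Otimes>\<^sub>M U01) {\<omega>\<in>space (PX \<Otimes>\<^sub>M U01). gg \<omega> = v}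
    = Pc True True v + Pc True False v + Pc False True v + Pc False False v"
  using prob_pred[of "\<lambda>_ _. True" v] by (simp add: sum_UNIV_bool2)
lemma pAZ: "measure (PX \<Otimes>\<^sub>M U01) {\<omega>\<in>space (PX \<Otimes>\<^sub>M U01). fA (fst \<omega>) \<and> gg \<omega> = v}
    = Pc True True v + Pc True False v"
  using prob_pred[of "\<lambda>a _. a" v] by (simp add: sum_UNIV_bool2)
lemma pYZ: "measure (PX \<Otimes>\<^sub>M U01) {\<omega>\<in>space (PX \<Otimes>\<^sub>M U01). fY (fst \<omega>) \<and> gg \<omega> = v}
    = Pc True True v + Pc False True v"
  using prob_pred[of "\<lambda>_ b. b" v] by (simp add: sum_UNIV_bool2)

lemma Pc_K: "Pc \<alpha> \<beta> v = q \<alpha> \<beta> * ((if vh \<alpha> \<beta> = v then cc \<alpha> \<beta> else 0) + (if vl \<alpha> \<beta> = v then 1 - cc \<alpha> \<beta> else 0))"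
  unfolding Pc_def by (rule prob_cell)

lemma Pc_vals:
  shows "Pc True True 3 = pA * mY" "Pc True True 1 = pA * (bY - mY)" "Pc True True 2 = 0" "Pc True True 0 = 0"
    and "Pc True False 2 = pA * (aY - mY)" "Pc True False 0 = pA * (1 - aY - bY + mY)" "Pc True False 3 = 0" "Pc True False 1 = 0"
    and "Pc False True 3 = (1 - pA) * mY" "Pc False True 2 = (1 - pA) * (aY - mY)" "Pc False True 1 = 0" "Pc False True 0 = 0"
    and "Pc False False 1 = (1 - pA) * (bY - mY)" "Pc False False 0 = (1 - pA) * (1 - aY - bY + mY)" "Pc False False 3 = 0" "Pc False False 2 = 0"
proof -
  have e: "Pc True True 3 = q True True * (mY / bY)" "Pc True True 1 = q True True * (1 - mY / bY)"
    "Pc True False 2 = q True False * ((aY - mY) / (1 - bY))" "Pc True False 0 = q True False * (1 - (aY - mY) / (1 - bY))"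
    "Pc False True 3 = q False True * (mY / aY)" "Pc False True 2 = q False True * (1 - mY / aY)"
    "Pc False False 1 = q False False * ((bY - mY) / (1 - aY))" "Pc False False 0 = q False False * (1 - (bY - mY) / (1 - aY))"
    by (simp_all add: Pc_K vh_def vl_def cc_def)
  show "Pc True True 3 = pA * mY" using e(1) al(5) by simp
  show "Pc True True 1 = pA * (bY - mY)" using e(2) al(6) by simp
  show "Pc True False 2 = pA * (aY - mY)" using e(3) al(7) by simp
  show "Pc True False 0 = pA * (1 - aY - bY + mY)" using e(4) al(8) by simp
  show "Pc False True 3 = (1 - pA) * mY" using e(5) al(9) by simp
  show "Pc False True 2 = (1 - pA) * (aY - mY)" using e(6) al(10) by simp
  show "Pc False False 1 = (1 - pA) * (bY - mY)" using e(7) al(11) by simp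
  show "Pc False False 0 = (1 - pA) * (1 - aY - bY + mY)" using e(8) al(12) by simp
  show "Pc True True 2 = 0" "Pc True True 0 = 0" "Pc True False 3 = 0" "Pc True False 1 = 0"
    "Pc False True 1 = 0" "Pc False True 0 = 0" "Pc False False 3 = 0" "Pc False False 2 = 0"
    by (simp_all add: Pc_K vh_def vl_def)
qed

lemma part2:
  "\<exists>(M :: ('x \<times> real) measure) X (MSa :: real measure) S (MZ :: real measure) g.
     is_rep PX M X MSa S MZ g \<and> MI_rep M X S MZ g fA = 0 \<and>
     MI_rep M X S MZ g fY = H2 PX fY - Delta PX fA fY * H2 PX fA"
proof (intro exI conjI)
  interpret PXs: prob_space PX by (rule PX)
  interpret Us: prob_space U01 by (rule U01_prob)
  interpret P: pair_prob_space PX U01 ..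
  let ?M = "PX \<Otimes>\<^sub>M U01"
  show "is_rep PX ?M fst U01 snd borel gg" by (rule rep_pair[OF PX gg_meas])
  have M: "prob_space ?M" by (rule P.prob_space_axioms)
  have eqZ: "(\<lambda>\<omega>. gg (fst \<omega>, snd \<omega>)) = gg" by simp
  have R: "\<And>\<omega>. \<omega> \<in> space ?M \<Longrightarrow> gg \<omega> \<in> {0, 1, 2, 3}" unfolding gg_def vh_def vl_def by auto
  have UA: "(\<lambda>\<omega>. fA (fst \<omega>)) \<in> measurable ?M (count_space UNIV)" by (rule measurable_compose[OF measurable_fst fA])
  have UY: "(\<lambda>\<omega>. fY (fst \<omega>)) \<in> measurable ?M (count_space UNIV)" by (rule measurable_compose[OF measurable_fst fY])
  have DX: "distr ?M PX fst = PX" by (rule Us.distr_pair_fst)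
  have tA: "measure ?M {\<omega>\<in>space ?M. fA (fst \<omega>)} = pA"
    unfolding pA_def by (rule transport[OF measurable_fst DX, symmetric]) measurable
  have tY: "measure ?M {\<omega>\<in>space ?M. fY (fst \<omega>)} = measure PX {x\<in>space PX. fY x}"
    by (rule transport[OF measurable_fst DX, symmetric]) measurable
  have Z: "measure ?M {\<omega>\<in>space ?M. gg \<omega> = 3} = mY" "measure ?M {\<omega>\<in>space ?M. gg \<omega> = 2} = aY - mY"
    "measure ?M {\<omega>\<in>space ?M. gg \<omega> = 1} = bY - mY" "measure ?M {\<omega>\<in>space ?M. gg \<omega> = 0} = 1 - aY - bY + mY"
    by (simp_all add: pZ Pc_vals algebra_simps)
  have ZA: "measure ?M {\<omega>\<in>space ?M. fA (fst \<omega>) \<and> gg \<omega> = 3} = pA * mY"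
    "measure ?M {\<omega>\<in>space ?M. fA (fst \<omega>) \<and> gg \<omega> = 2} = pA * (aY - mY)"
    "measure ?M {\<omega>\<in>space ?M. fA (fst \<omega>) \<and> gg \<omega> = 1} = pA * (bY - mY)"
    "measure ?M {\<omega>\<in>space ?M. fA (fst \<omega>) \<and> gg \<omega> = 0} = pA * (1 - aY - bY + mY)"
    by (simp_all add: pAZ Pc_vals algebra_simps)
  have ZY: "measure ?M {\<omega>\<in>space ?M. fY (fst \<omega>) \<and> gg \<omega> = 3} = mY"
    "measure ?M {\<omega>\<in>space ?M. fY (fst \<omega>) \<and> gg \<omega> = 2} = (1 - pA) * (aY - mY)"
    "measure ?M {\<omega>\<in>space ?M. fY (fst \<omega>) \<and> gg \<omega> = 1} = pA * (bY - mY)"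
    "measure ?M {\<omega>\<in>space ?M. fY (fst \<omega>) \<and> gg \<omega> = 0} = 0"
    by (simp_all add: pYZ Pc_vals algebra_simps)
  have finR: "finite {0, 1, 2, 3::real}" by simp
  have S4: "\<And>f. (\<Sum>v\<in>{0, 1, 2, 3::real}. f v) = f 0 + (f 1 + (f 2 + f 3))" by simp
  have "MI_rep ?M fst snd borel gg fA = Hb pA - ((1 - aY - bY + mY) * Hb (pA * (1 - aY - bY + mY) / (1 - aY - bY + mY))
      + ((bY - mY) * Hb (pA * (bY - mY) / (bY - mY)) + ((aY - mY) * Hb (pA * (aY - mY) / (aY - mY)) + mY * Hb (pA * mY / mY))))"
  proof -
    have d: "prob_space.mutual_information ?M 2 (count_space UNIV) borel (\<lambda>\<omega>. fA (fst \<omega>)) gg =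
      Hb (measure ?M {\<omega>\<in>space ?M. fA (fst \<omega>)}) - (\<Sum>v\<in>{0, 1, 2, 3}. measure ?M {\<omega>\<in>space ?M. gg \<omega> = v} *
        Hb (measure ?M {\<omega>\<in>space ?M. fA (fst \<omega>) \<and> gg \<omega> = v} / measure ?M {\<omega>\<in>space ?M. gg \<omega> = v}))"
      by (rule disc_MI[OF M gg_meas finR R UA])
    show ?thesis unfolding MI_rep_def eqZ d tA S4 Z ZA ..
  qed
  also have "\<dots> = Hb pA - (mY + (aY - mY) + (bY - mY) + (1 - aY - bY + mY)) * Hb pA"
    unfolding xHb1 by (simp add: algebra_simps)
  also have "\<dots> = 0" by simp
  finally show "MI_rep ?M fst snd borel gg fA = 0" .
  have "MI_rep ?M fst snd borel gg fY = Hb (measure PX {x\<in>space PX. fY x}) - (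
      (1 - aY - bY + mY) * Hb (0 / (1 - aY - bY + mY)) + ((bY - mY) * Hb (pA * (bY - mY) / (bY - mY))
      + ((aY - mY) * Hb ((1 - pA) * (aY - mY) / (aY - mY)) + mY * Hb (mY / mY))))"
  proof -
    have d: "prob_space.mutual_information ?M 2 (count_space UNIV) borel (\<lambda>\<omega>. fY (fst \<omega>)) gg =
      Hb (measure ?M {\<omega>\<in>space ?M. fY (fst \<omega>)}) - (\<Sum>v\<in>{0, 1, 2, 3}. measure ?M {\<omega>\<in>space ?M. gg \<omega> = v} *
        Hb (measure ?M {\<omega>\<in>space ?M. fY (fst \<omega>) \<and> gg \<omega> = v} / measure ?M {\<omega>\<in>space ?M. gg \<omega> = v}))"
      by (rule disc_MI[OF M gg_meas finR R UY])
    show ?thesis unfolding MI_rep_def eqZ d tY S4 Z ZY by simp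
  qed
  also have "\<dots> = Hb (measure PX {x\<in>space PX. fY x}) - ((aY - mY) + (bY - mY)) * Hb pA"
    unfolding xHb1 xHb2 by (simp add: Hb_sym algebra_simps)
  also have "(aY - mY) + (bY - mY) = \<bar>aY - bY\<bar>" unfolding mY_def by auto
  also have "Hb (measure PX {x\<in>space PX. fY x}) - \<bar>aY - bY\<bar> * Hb pA = H2 PX fY - Delta PX fA fY * H2 PX fA"
    unfolding H2_eq[OF PX fY] H2_eq[OF PX fA] Delta_def aY_def bY_def pA_def ..
  finally show "MI_rep ?M fst snd borel gg fY = H2 PX fY - Delta PX fA fY * H2 PX fA" .
qed

end


theorem theorem1:
  fixes PX :: "'x measure" and fA fY :: "'x \<Rightarrow> bool"
  assumes "prob_space PX"
    and "fA \<in> measurable PX (count_space UNIV)"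
    and "fY \<in> measurable PX (count_space UNIV)"
  shows "(\<forall>(M :: 'm measure) X (MSa :: 's measure) S (MZ :: 'z measure) g.
            is_rep PX M X MSa S MZ g \<and> MI_rep M X S MZ g fA = 0 \<longrightarrow>
            MI_rep M X S MZ g fY \<le> H2 PX fY - Delta PX fA fY * H2 PX fA)
       \<and> (\<exists>(M :: ('x \<times> real) measure) X (MSa :: real measure) S (MZ :: real measure) g.
            is_rep PX M X MSa S MZ g \<and> MI_rep M X S MZ g fA = 0 \<and>
            MI_rep M X S MZ g fY = H2 PX fY - Delta PX fA fY * H2 PX fA)"
proof (intro conjI allI impI)
  fix M :: "'m measure" and X and MSa :: "'s measure" and S and MZ :: "'z measure" and g
  assume h: "is_rep PX M X MSa S MZ g \<and> MI_rep M X S MZ g fA = 0"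
  show "MI_rep M X S MZ g fY \<le> H2 PX fY - Delta PX fA fY * H2 PX fA"
    using part1[OF assms] h by blast
next
  show "\<exists>(M :: ('x \<times> real) measure) X (MSa :: real measure) S (MZ :: real measure) g.
            is_rep PX M X MSa S MZ g \<and> MI_rep M X S MZ g fA = 0 \<and>
            MI_rep M X S MZ g fY = H2 PX fY - Delta PX fA fY * H2 PX fA"
    by (rule part2[OF assms])
qed

end
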